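(* Let $(\mathcal C,\otimes,\mathbb 1,c)$ be a symmetric monoidal category and $(H,m,u,\underline\Delta,\underline\varepsilon,S,S^{-1},\Lambda,\lambda,\phi,\theta)$ an extended Hopf algebra in $\mathcal C$. Then $(\phi,\theta)$ is an extended structure on the Frobenius algebra $(H,m,u,\Delta,\varepsilon)$, where $\Delta=(m\otimes S)(\mathrm{id}_H\otimes\underline\Delta\Lambda)$ and $\varepsilon=\lambda$.
   Context: Monoidal categories are taken strict. A Hopf algebra in $\mathcal C$ is $(H,m,u,\underline\Delta,\underline\varepsilon,S)$: an associative unital algebra and coassociative counital coalgebra with $\underline\Delta,\underline\varepsilon$ algebra morphisms and $m(S\otimes\mathrm{id})\underline\Delta=u\underline\varepsilon=m(\mathrm{id}\otimes S)\underline\Delta$. A left integral $\Lambda:\mathbb 1\to H$ satisfies $m(\mathrm{id}\otimes\Lambda)=\Lambda\underline\varepsilon$; a right cointegral $\lambda:H\to\mathbb 1$ satisfies $(\lambda\otimes\mathrm{id})\underline\Delta=u\lambda$; normalized means $\lambda\Lambda=\mathrm{id}_{\mathbb 1}$. An integral Hopf algebra has invertible antipode and a normalized pair. A morphism of integral Hopf algebras is an algebra and coalgebra morphism $f$ with $f\Lambda_H=\Lambda_K$, $\lambda_Kf=\lambda_H$ (and compatible with the antipodes). An extended Hopf algebra is an integral Hopf algebra with $\phi:H\to H$, $\theta:\mathbb 1\to H$ such that (i) $\phi$ is a morphism of integral Hopf algebras with $\phi^2=\mathrm{id}_H$; (ii) $\phi m(\theta\otimes\mathrm{id}_H)=m(\theta\otimes\mathrm{id}_H)$;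 (iii) $m(\phi\otimes S)\underline\Delta\Lambda=m(\theta\otimes\theta)$. For a Frobenius algebra $(A,m,u,\Delta,\varepsilon)$, an extended structure is $(\phi,\theta)$ with (i) $\phi$ a Frobenius algebra morphism (preserving $m,u,\Delta,\varepsilon$), $\phi^2=\mathrm{id}$; (ii) $\phi m(\theta\otimes\mathrm{id})=m(\theta\otimes\mathrm{id})$; (iii) $m(\phi\otimes\mathrm{id})\Delta u=m(\theta\otimes\theta)$. *)

theory Defs
  imports Main
begin

text \<open>A (strict) monoidal category with braiding, given by raw data:
objects, hom-sets, composition (Cmp C g f means g after f), identities,
tensor on objects and on morphisms, unit object and braiding.\<close>

record ('o, 'm) smc =
  Obj :: "'o set"
  Hom :: "'o \<Rightarrow> 'o \<Rightarrow> 'm set"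
  Cmp :: "'m \<Rightarrow> 'm \<Rightarrow> 'm"
  Idm  :: "'o \<Rightarrow> 'm"
  TO  :: "'o \<Rightarrow> 'o \<Rightarrow> 'o"
  TM  :: "'m \<Rightarrow> 'm \<Rightarrow> 'm"
  Uo  :: "'o"
  Br  :: "'o \<Rightarrow> 'o \<Rightarrow> 'm"

definition strict_symmetric_monoidal_category :: "('o, 'm) smc \<Rightarrow> bool" where
  "strict_symmetric_monoidal_category C \<longleftrightarrow>
     (\<forall>A B f. f \<in> Hom C A B \<longrightarrow> A \<in> Obj C \<and> B \<in> Obj C) \<and>
     (\<forall>A \<in> Obj C. Idm C A \<in> Hom C A A) \<and>
     (\<forall>A B D f g. f \<in> Hom C A B \<longrightarrow> g \<in> Hom C B D \<longrightarrow> Cmp C g f \<in> Hom C A D) \<and>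
     (\<forall>A B D E f g h. f \<in> Hom C A B \<longrightarrow> g \<in> Hom C B D \<longrightarrow> h \<in> Hom C D E \<longrightarrow>
        Cmp C h (Cmp C g f) = Cmp C (Cmp C h g) f) \<and>
     (\<forall>A B f. f \<in> Hom C A B \<longrightarrow> Cmp C (Idm C B) f = f \<and> Cmp C f (Idm C A) = f) \<and>
     Uo C \<in> Obj C \<and>
     (\<forall>A \<in> Obj C. \<forall>B \<in> Obj C. TO C A B \<in> Obj C) \<and>
     (\<forall>A B A' B' f g. f \<in> Hom C A B \<longrightarrow> g \<in> Hom C A' B' \<longrightarrow>
        TM C f g \<in> Hom C (TO C A A') (TO C B B')) \<and>
     (\<forall>A \<in> Obj C. \<forall>B \<in> Obj C. TM C (Idm C A) (Idm C B) = Idm C (TO C A B)) \<and>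
     (\<forall>A B D A' B' D' f g f' g'. f \<in> Hom C A B \<longrightarrow> g \<in> Hom C B D \<longrightarrow>
        f' \<in> Hom C A' B' \<longrightarrow> g' \<in> Hom C B' D' \<longrightarrow>
        TM C (Cmp C g f) (Cmp C g' f') = Cmp C (TM C g g') (TM C f f')) \<and>
     (\<forall>A \<in> Obj C. \<forall>B \<in> Obj C. \<forall>D \<in> Obj C. TO C (TO C A B) D = TO C A (TO C B D)) \<and>
     (\<forall>A \<in> Obj C. TO C (Uo C) A = A \<and> TO C A (Uo C) = A) \<and>
     (\<forall>A B A' B' A'' B'' f g h. f \<in> Hom C A B \<longrightarrow> g \<in> Hom C A' B' \<longrightarrow> h \<in> Hom C A'' B'' \<longrightarrow>
        TM C (TM C f g) h = TM C f (TM C g h)) \<and>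
     (\<forall>A B f. f \<in> Hom C A B \<longrightarrow> TM C (Idm C (Uo C)) f = f \<and> TM C f (Idm C (Uo C)) = f) \<and>
     (\<forall>A \<in> Obj C. \<forall>B \<in> Obj C. Br C A B \<in> Hom C (TO C A B) (TO C B A)) \<and>
     (\<forall>A B A' B' f g. f \<in> Hom C A B \<longrightarrow> g \<in> Hom C A' B' \<longrightarrow>
        Cmp C (Br C B B') (TM C f g) = Cmp C (TM C g f) (Br C A A')) \<and>
     (\<forall>A \<in> Obj C. \<forall>B \<in> Obj C. \<forall>D \<in> Obj C.
        Br C A (TO C B D) = Cmp C (TM C (Idm C B) (Br C A D)) (TM C (Br C A B) (Idm C D)) \<and>
        Br C (TO C A B) D = Cmp C (TM C (Br C A D) (Idm C B)) (TM C (Idm C A) (Br C B D))) \<and>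
     (\<forall>A \<in> Obj C. \<forall>B \<in> Obj C. Cmp C (Br C B A) (Br C A B) = Idm C (TO C A B))"

definition is_algebra :: "('o, 'm) smc \<Rightarrow> 'o \<Rightarrow> 'm \<Rightarrow> 'm \<Rightarrow> bool" where
  "is_algebra C H m u \<longleftrightarrow>
     H \<in> Obj C \<and> m \<in> Hom C (TO C H H) H \<and> u \<in> Hom C (Uo C) H \<and>
     Cmp C m (TM C m (Idm C H)) = Cmp C m (TM C (Idm C H) m) \<and>
     Cmp C m (TM C u (Idm C H)) = Idm C H \<and>
     Cmp C m (TM C (Idm C H) u) = Idm C H"

definition is_coalgebra :: "('o, 'm) smc \<Rightarrow> 'o \<Rightarrow> 'm \<Rightarrow> 'm \<Rightarrow> bool" where
  "is_coalgebra C H d e \<longleftrightarrow>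
     H \<in> Obj C \<and> d \<in> Hom C H (TO C H H) \<and> e \<in> Hom C H (Uo C) \<and>
     Cmp C (TM C d (Idm C H)) d = Cmp C (TM C (Idm C H) d) d \<and>
     Cmp C (TM C e (Idm C H)) d = Idm C H \<and>
     Cmp C (TM C (Idm C H) e) d = Idm C H"

definition is_hopf_algebra ::
  "('o, 'm) smc \<Rightarrow> 'o \<Rightarrow> 'm \<Rightarrow> 'm \<Rightarrow> 'm \<Rightarrow> 'm \<Rightarrow> 'm \<Rightarrow> bool" where
  "is_hopf_algebra C H m u d e S \<longleftrightarrow>
     is_algebra C H m u \<and> is_coalgebra C H d e \<and> S \<in> Hom C H H \<and>
     Cmp C d m = Cmp C (TM C m m)
        (Cmp C (TM C (Idm C H) (TM C (Br C H H) (Idm C H))) (TM C d d)) \<and>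
     Cmp C d u = TM C u u \<and>
     Cmp C e m = TM C e e \<and>
     Cmp C e u = Idm C (Uo C) \<and>
     Cmp C m (Cmp C (TM C S (Idm C H)) d) = Cmp C u e \<and>
     Cmp C m (Cmp C (TM C (Idm C H) S) d) = Cmp C u e"

definition is_integral_hopf_algebra ::
  "('o, 'm) smc \<Rightarrow> 'o \<Rightarrow> 'm \<Rightarrow> 'm \<Rightarrow> 'm \<Rightarrow> 'm \<Rightarrow> 'm \<Rightarrow> 'm \<Rightarrow> 'm \<Rightarrow> 'm \<Rightarrow> bool" where
  "is_integral_hopf_algebra C H m u d e S Si Lam lam \<longleftrightarrow>
     is_hopf_algebra C H m u d e S \<and>
     Si \<in> Hom C H H \<and> Cmp C S Si = Idm C H \<and> Cmp C Si S = Idm C H \<and>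
     Lam \<in> Hom C (Uo C) H \<and> lam \<in> Hom C H (Uo C) \<and>
     Cmp C m (TM C (Idm C H) Lam) = Cmp C Lam e \<and>
     Cmp C (TM C lam (Idm C H)) d = Cmp C u lam \<and>
     Cmp C lam Lam = Idm C (Uo C)"

definition is_integral_hopf_endo ::
  "('o, 'm) smc \<Rightarrow> 'o \<Rightarrow> 'm \<Rightarrow> 'm \<Rightarrow> 'm \<Rightarrow> 'm \<Rightarrow> 'm \<Rightarrow> 'm \<Rightarrow> 'm \<Rightarrow> 'm \<Rightarrow> bool" where
  "is_integral_hopf_endo C H m u d e S Lam lam f \<longleftrightarrow>
     f \<in> Hom C H H \<and>
     Cmp C f m = Cmp C m (TM C f f) \<and> Cmp C f u = u \<and>
     Cmp C d f = Cmp C (TM C f f) d \<and> Cmp C e f = e \<and>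
     Cmp C f Lam = Lam \<and> Cmp C lam f = lam \<and>
     Cmp C f S = Cmp C S f"

definition is_extended_hopf_algebra ::
  "('o, 'm) smc \<Rightarrow> 'o \<Rightarrow> 'm \<Rightarrow> 'm \<Rightarrow> 'm \<Rightarrow> 'm \<Rightarrow> 'm \<Rightarrow> 'm \<Rightarrow> 'm \<Rightarrow> 'm
     \<Rightarrow> 'm \<Rightarrow> 'm \<Rightarrow> bool" where
  "is_extended_hopf_algebra C H m u d e S Si Lam lam phi theta \<longleftrightarrow>
     is_integral_hopf_algebra C H m u d e S Si Lam lam \<and>
     phi \<in> Hom C H H \<and> theta \<in> Hom C (Uo C) H \<and>
     is_integral_hopf_endo C H m u d e S Lam lam phi \<and>
     Cmp C phi phi = Idm C H \<and>
     Cmp C phi (Cmp C m (TM C theta (Idm C H))) = Cmp C m (TM C theta (Idm C H)) \<and>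
     Cmp C m (Cmp C (TM C phi S) (Cmp C d Lam)) = Cmp C m (TM C theta theta)"

definition is_frobenius_algebra ::
  "('o, 'm) smc \<Rightarrow> 'o \<Rightarrow> 'm \<Rightarrow> 'm \<Rightarrow> 'm \<Rightarrow> 'm \<Rightarrow> bool" where
  "is_frobenius_algebra C A m u d e \<longleftrightarrow>
     is_algebra C A m u \<and> is_coalgebra C A d e \<and>
     Cmp C (TM C (Idm C A) m) (TM C d (Idm C A)) = Cmp C d m \<and>
     Cmp C (TM C m (Idm C A)) (TM C (Idm C A) d) = Cmp C d m"

definition is_extended_frobenius_structure ::
  "('o, 'm) smc \<Rightarrow> 'o \<Rightarrow> 'm \<Rightarrow> 'm \<Rightarrow> 'm \<Rightarrow> 'm \<Rightarrow> 'm \<Rightarrow> 'm \<Rightarrow> bool" where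
  "is_extended_frobenius_structure C A m u d e phi theta \<longleftrightarrow>
     is_frobenius_algebra C A m u d e \<and>
     phi \<in> Hom C A A \<and> theta \<in> Hom C (Uo C) A \<and>
     Cmp C phi m = Cmp C m (TM C phi phi) \<and> Cmp C phi u = u \<and>
     Cmp C d phi = Cmp C (TM C phi phi) d \<and> Cmp C e phi = e \<and>
     Cmp C phi phi = Idm C A \<and>
     Cmp C phi (Cmp C m (TM C theta (Idm C A))) = Cmp C m (TM C theta (Idm C A)) \<and>
     Cmp C m (Cmp C (TM C phi (Idm C A)) (Cmp C d u)) = Cmp C m (TM C theta theta)"

end

theory Submission
  imports Defs
begin

datatype 'm ar = Ar (dm: nat) (cd: nat) (mo: 'm)


locale sm =
  fixes C :: "('o,'m) smc" and H :: 'o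
  assumes ssmc: "strict_symmetric_monoidal_category C" and HO: "H \<in> Obj C"
begin

lemma ax_1: "\<And>A B f. f \<in> Hom C A B \<Longrightarrow> A \<in> Obj C \<and> B \<in> Obj C"
  using ssmc[unfolded strict_symmetric_monoidal_category_def, THEN conjunct1] by blast

lemma ax_2: "\<And>A. A \<in> Obj C \<Longrightarrow> Idm C A \<in> Hom C A A"
  using ssmc[unfolded strict_symmetric_monoidal_category_def, THEN conjunct2, THEN conjunct1] by blast

lemma ax_3: "\<And>A B D f g. f \<in> Hom C A B \<Longrightarrow> g \<in> Hom C B D \<Longrightarrow> Cmp C g f \<in> Hom C A D"
  using ssmc[unfolded strict_symmetric_monoidal_category_def, THEN conjunct2, THEN conjunct2, THEN conjunct1] by blast

lemma ax_4: "\<And>A B D E f g h. f \<in> Hom C A B \<Longrightarrow> g \<in> Hom C B D \<Longrightarrow> h \<in> Hom C D E \<Longrightarrow>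
        Cmp C h (Cmp C g f) = Cmp C (Cmp C h g) f"
  using ssmc[unfolded strict_symmetric_monoidal_category_def, THEN conjunct2, THEN conjunct2, THEN conjunct2, THEN conjunct1] by blast

lemma ax_5: "\<And>A B f. f \<in> Hom C A B \<Longrightarrow> Cmp C (Idm C B) f = f"
  using ssmc[unfolded strict_symmetric_monoidal_category_def, THEN conjunct2, THEN conjunct2, THEN conjunct2, THEN conjunct2, THEN conjunct1] by blast

lemma ax_6: "\<And>A B f. f \<in> Hom C A B \<Longrightarrow> Cmp C f (Idm C A) = f"
  using ssmc[unfolded strict_symmetric_monoidal_category_def, THEN conjunct2, THEN conjunct2, THEN conjunct2, THEN conjunct2, THEN conjunct1] by blast

lemma ax_7: "Uo C \<in> Obj C"
  using ssmc[unfolded strict_symmetric_monoidal_category_def, THEN conjunct2, THEN conjunct2, THEN conjunct2, THEN conjunct2, THEN conjunct2, THEN conjunct1] by blast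

lemma ax_8: "\<And>A B. A \<in> Obj C \<Longrightarrow> B \<in> Obj C \<Longrightarrow> TO C A B \<in> Obj C"
  using ssmc[unfolded strict_symmetric_monoidal_category_def, THEN conjunct2, THEN conjunct2, THEN conjunct2, THEN conjunct2, THEN conjunct2, THEN conjunct2, THEN conjunct1] by blast

lemma ax_9: "\<And>A B A' B' f g. f \<in> Hom C A B \<Longrightarrow> g \<in> Hom C A' B' \<Longrightarrow>
        TM C f g \<in> Hom C (TO C A A') (TO C B B')"
  using ssmc[unfolded strict_symmetric_monoidal_category_def, THEN conjunct2, THEN conjunct2, THEN conjunct2, THEN conjunct2, THEN conjunct2, THEN conjunct2, THEN conjunct2, THEN conjunct1] by blast

lemma ax_10: "\<And>A B. A \<in> Obj C \<Longrightarrow> B \<in> Obj C \<Longrightarrow> TM C (Idm C A) (Idm C B) = Idm C (TO C A B)"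
  using ssmc[unfolded strict_symmetric_monoidal_category_def, THEN conjunct2, THEN conjunct2, THEN conjunct2, THEN conjunct2, THEN conjunct2, THEN conjunct2, THEN conjunct2, THEN conjunct2, THEN conjunct1] by blast

lemma ax_11: "\<And>A B D A' B' D' f g f' g'. f \<in> Hom C A B \<Longrightarrow> g \<in> Hom C B D \<Longrightarrow>
        f' \<in> Hom C A' B' \<Longrightarrow> g' \<in> Hom C B' D' \<Longrightarrow>
        TM C (Cmp C g f) (Cmp C g' f') = Cmp C (TM C g g') (TM C f f')"
  using ssmc[unfolded strict_symmetric_monoidal_category_def, THEN conjunct2, THEN conjunct2, THEN conjunct2, THEN conjunct2, THEN conjunct2, THEN conjunct2, THEN conjunct2, THEN conjunct2, THEN conjunct2, THEN conjunct1] by blast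

lemma ax_12: "\<And>A B D. A \<in> Obj C \<Longrightarrow> B \<in> Obj C \<Longrightarrow> D \<in> Obj C \<Longrightarrow> TO C (TO C A B) D = TO C A (TO C B D)"
  using ssmc[unfolded strict_symmetric_monoidal_category_def, THEN conjunct2, THEN conjunct2, THEN conjunct2, THEN conjunct2, THEN conjunct2, THEN conjunct2, THEN conjunct2, THEN conjunct2, THEN conjunct2, THEN conjunct2, THEN conjunct1] by blast

lemma ax_13: "\<And>A. A \<in> Obj C \<Longrightarrow> TO C (Uo C) A = A"
  using ssmc[unfolded strict_symmetric_monoidal_category_def, THEN conjunct2, THEN conjunct2, THEN conjunct2, THEN conjunct2, THEN conjunct2, THEN conjunct2, THEN conjunct2, THEN conjunct2, THEN conjunct2, THEN conjunct2, THEN conjunct2, THEN conjunct1] by blast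

lemma ax_14: "\<And>A. A \<in> Obj C \<Longrightarrow> TO C A (Uo C) = A"
  using ssmc[unfolded strict_symmetric_monoidal_category_def, THEN conjunct2, THEN conjunct2, THEN conjunct2, THEN conjunct2, THEN conjunct2, THEN conjunct2, THEN conjunct2, THEN conjunct2, THEN conjunct2, THEN conjunct2, THEN conjunct2, THEN conjunct1] by blast

lemma ax_15: "\<And>A B A' B' A'' B'' f g h. f \<in> Hom C A B \<Longrightarrow> g \<in> Hom C A' B' \<Longrightarrow> h \<in> Hom C A'' B'' \<Longrightarrow>
        TM C (TM C f g) h = TM C f (TM C g h)"
  using ssmc[unfolded strict_symmetric_monoidal_category_def, THEN conjunct2, THEN conjunct2, THEN conjunct2, THEN conjunct2, THEN conjunct2, THEN conjunct2, THEN conjunct2, THEN conjunct2, THEN conjunct2, THEN conjunct2, THEN conjunct2, THEN conjunct2, THEN conjunct1] by blast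

lemma ax_16: "\<And>A B f. f \<in> Hom C A B \<Longrightarrow> TM C (Idm C (Uo C)) f = f"
  using ssmc[unfolded strict_symmetric_monoidal_category_def, THEN conjunct2, THEN conjunct2, THEN conjunct2, THEN conjunct2, THEN conjunct2, THEN conjunct2, THEN conjunct2, THEN conjunct2, THEN conjunct2, THEN conjunct2, THEN conjunct2, THEN conjunct2, THEN conjunct2, THEN conjunct1] by blast

lemma ax_17: "\<And>A B f. f \<in> Hom C A B \<Longrightarrow> TM C f (Idm C (Uo C)) = f"
  using ssmc[unfolded strict_symmetric_monoidal_category_def, THEN conjunct2, THEN conjunct2, THEN conjunct2, THEN conjunct2, THEN conjunct2, THEN conjunct2, THEN conjunct2, THEN conjunct2, THEN conjunct2, THEN conjunct2, THEN conjunct2, THEN conjunct2, THEN conjunct2, THEN conjunct1] by blast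

lemma ax_18: "\<And>A B. A \<in> Obj C \<Longrightarrow> B \<in> Obj C \<Longrightarrow> Br C A B \<in> Hom C (TO C A B) (TO C B A)"
  using ssmc[unfolded strict_symmetric_monoidal_category_def, THEN conjunct2, THEN conjunct2, THEN conjunct2, THEN conjunct2, THEN conjunct2, THEN conjunct2, THEN conjunct2, THEN conjunct2, THEN conjunct2, THEN conjunct2, THEN conjunct2, THEN conjunct2, THEN conjunct2, THEN conjunct2, THEN conjunct1] by blast

lemma ax_19: "\<And>A B A' B' f g. f \<in> Hom C A B \<Longrightarrow> g \<in> Hom C A' B' \<Longrightarrow>
        Cmp C (Br C B B') (TM C f g) = Cmp C (TM C g f) (Br C A A')"
  using ssmc[unfolded strict_symmetric_monoidal_category_def, THEN conjunct2, THEN conjunct2, THEN conjunct2, THEN conjunct2, THEN conjunct2, THEN conjunct2, THEN conjunct2, THEN conjunct2, THEN conjunct2, THEN conjunct2, THEN conjunct2, THEN conjunct2, THEN conjunct2, THEN conjunct2, THEN conjunct2, THEN conjunct1] by blast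

lemma ax_20: "\<And>A B D. A \<in> Obj C \<Longrightarrow> B \<in> Obj C \<Longrightarrow> D \<in> Obj C \<Longrightarrow>
        Br C A (TO C B D) = Cmp C (TM C (Idm C B) (Br C A D)) (TM C (Br C A B) (Idm C D))"
  using ssmc[unfolded strict_symmetric_monoidal_category_def, THEN conjunct2, THEN conjunct2, THEN conjunct2, THEN conjunct2, THEN conjunct2, THEN conjunct2, THEN conjunct2, THEN conjunct2, THEN conjunct2, THEN conjunct2, THEN conjunct2, THEN conjunct2, THEN conjunct2, THEN conjunct2, THEN conjunct2, THEN conjunct2, THEN conjunct1] by blast

lemma ax_21: "\<And>A B. A \<in> Obj C \<Longrightarrow> B \<in> Obj C \<Longrightarrow> Cmp C (Br C B A) (Br C A B) = Idm C (TO C A B)"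
  using ssmc[unfolded strict_symmetric_monoidal_category_def, THEN conjunct2, THEN conjunct2, THEN conjunct2, THEN conjunct2, THEN conjunct2, THEN conjunct2, THEN conjunct2, THEN conjunct2, THEN conjunct2, THEN conjunct2, THEN conjunct2, THEN conjunct2, THEN conjunct2, THEN conjunct2, THEN conjunct2, THEN conjunct2, THEN conjunct2] by blast

lemma hex2: "\<And>A B D. A \<in> Obj C \<Longrightarrow> B \<in> Obj C \<Longrightarrow> D \<in> Obj C \<Longrightarrow>
        Br C (TO C A B) D = Cmp C (TM C (Br C A D) (Idm C B)) (TM C (Idm C A) (Br C B D))"
  using ssmc[unfolded strict_symmetric_monoidal_category_def, THEN conjunct2, THEN conjunct2, THEN conjunct2, THEN conjunct2, THEN conjunct2, THEN conjunct2, THEN conjunct2, THEN conjunct2, THEN conjunct2, THEN conjunct2, THEN conjunct2, THEN conjunct2, THEN conjunct2, THEN conjunct2, THEN conjunct2, THEN conjunct2, THEN conjunct1] by blast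
lemmas ax = ax_1 ax_2 ax_3 ax_4 ax_5 ax_6 ax_7 ax_8 ax_9 ax_10 ax_11 ax_12 ax_13 ax_14 ax_15 ax_16 ax_17 ax_18 ax_19 ax_20 ax_21


fun P :: "nat \<Rightarrow> 'o" where "P 0 = Uo C" | "P (Suc n) = TO C H (P n)"

lemma P_obj[simp]: "P n \<in> Obj C"
  by (induction n) (auto simp: ax HO)

lemma TO_P: "TO C (P a) (P b) = P (a + b)"
  by (induction a) (auto simp: ax HO)

lemma THU[simp]: "TO C H (Uo C) = H" using ax HO by simp
lemma P1[simp]: "P 1 = H" by (simp add: ax HO)
lemma P0': "P 0 = Uo C" by simp


declare P.simps[simp del]
lemma P0[simp]: "P 0 = Uo C" by (simp add: P.simps)
lemma PS: "P (Suc n) = TO C H (P n)" by (simp add: P.simps)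
lemma nums[simp]: "Suc (Suc 0) = 2" by simp
lemma PS0[simp]: "P (Suc 0) = H" by (simp add: P.simps ax HO)

definition comp (infixr "\<odot>" 55) where
  "y \<odot> x = Ar (dm x) (cd y) (Cmp C (mo y) (mo x))"
definition tens (infixr "\<boxtimes>" 60) where
  "x \<boxtimes> y = Ar (dm x + dm y) (cd x + cd y) (TM C (mo x) (mo y))"
definition valid where "valid x \<longleftrightarrow> mo x \<in> Hom C (P (dm x)) (P (cd x))"
definition idn where "idn n = Ar n n (Idm C (P n))"
definition br where "br a b = Ar (a + b) (b + a) (Br C (P a) (P b))"

lemma dc_simps[simp]:
  "dm (y \<odot> x) = dm x" "cd (y \<odot> x) = cd y"
  "dm (x \<boxtimes> y) = dm x + dm y" "cd (x \<boxtimes> y) = cd x + cd y"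
  "dm (idn n) = n" "cd (idn n) = n" "dm (br a b) = a + b" "cd (br a b) = b + a"
  by (simp_all add: comp_def tens_def idn_def br_def)

lemma valid_comp[simp]: "valid x \<Longrightarrow> valid y \<Longrightarrow> cd x = dm y \<Longrightarrow> valid (y \<odot> x)"
  unfolding valid_def comp_def using ax(3) by auto
lemma valid_tens[simp]: "valid x \<Longrightarrow> valid y \<Longrightarrow> valid (x \<boxtimes> y)"
  unfolding valid_def tens_def using ax(9) TO_P by (metis ar.sel)
lemma valid_idn[simp]: "valid (idn n)"
  unfolding valid_def idn_def using ax(2) by auto
lemma valid_br[simp]: "valid (br a b)"
  unfolding valid_def br_def using ax(18) TO_P by (metis P_obj ar.sel)

lemma ar_eq: "dm x = dm y \<Longrightarrow> cd x = cd y \<Longrightarrow> mo x = mo y \<Longrightarrow> x = y"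
  by (cases x; cases y) auto

lemma cassoc: "valid x \<Longrightarrow> valid y \<Longrightarrow> valid z \<Longrightarrow> cd x = dm y \<Longrightarrow> cd y = dm z \<Longrightarrow>
   z \<odot> (y \<odot> x) = (z \<odot> y) \<odot> x"
  unfolding valid_def comp_def using ax(4) by auto
lemma idl: "valid x \<Longrightarrow> n = cd x \<Longrightarrow> idn n \<odot> x = x"
  unfolding valid_def comp_def idn_def using ax(5) by (cases x) auto
lemma idr: "valid x \<Longrightarrow> n = dm x \<Longrightarrow> x \<odot> idn n = x"
  unfolding valid_def comp_def idn_def using ax(6) by (cases x) auto
lemma inter: "valid f \<Longrightarrow> valid g \<Longrightarrow> valid f' \<Longrightarrow> valid g' \<Longrightarrow> cd f = dm g \<Longrightarrow> cd f' = dm g' \<Longrightarrow>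
   (g \<boxtimes> g') \<odot> (f \<boxtimes> f') = (g \<odot> f) \<boxtimes> (g' \<odot> f')"
  unfolding valid_def comp_def tens_def using ax(11) by auto
lemma tassoc: "valid x \<Longrightarrow> valid y \<Longrightarrow> valid z \<Longrightarrow> (x \<boxtimes> y) \<boxtimes> z = x \<boxtimes> (y \<boxtimes> z)"
  unfolding valid_def tens_def using ax(15) by auto
lemma tidn: "idn a \<boxtimes> idn b = idn (a + b)"
  unfolding tens_def idn_def using ax(10) TO_P by simp
lemma tidn0l: "valid x \<Longrightarrow> idn 0 \<boxtimes> x = x"
  unfolding valid_def tens_def idn_def using ax(16) by (cases x) auto
lemma tidn0r: "valid x \<Longrightarrow> x \<boxtimes> idn 0 = x"
  unfolding valid_def tens_def idn_def using ax(17) by (cases x) auto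
lemma brnat: "valid f \<Longrightarrow> valid g \<Longrightarrow> b = cd f \<Longrightarrow> b' = cd g \<Longrightarrow>
   br b b' \<odot> (f \<boxtimes> g) = (g \<boxtimes> f) \<odot> br (dm f) (dm g)"
  unfolding valid_def comp_def tens_def br_def using ax(19) by auto
lemma brsym: "br b a \<odot> br a b = idn (a + b)"
  unfolding comp_def br_def idn_def using ax(21) TO_P by simp
lemma hexa: "br a (b + k) = (idn b \<boxtimes> br a k) \<odot> (br a b \<boxtimes> idn k)"
  unfolding comp_def br_def idn_def tens_def using ax(20)[of "P a" "P b" "P k"] by (simp add: TO_P add.assoc add.commute add.left_commute)
lemma hexb: "br (a + b) k = (br a k \<boxtimes> idn b) \<odot> (idn a \<boxtimes> br b k)"
  unfolding comp_def br_def idn_def tens_def using hex2[of "P a" "P b" "P k"] by (simp add: TO_P add.assoc add.commute add.left_commute)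

lemma br0: "br a 0 = idn a"
proof -
  have h: "br a 0 = br a 0 \<odot> br a 0"
    using hexa[of a 0 0] by (simp add: tidn0l tidn0r)
  have s: "br 0 a \<odot> br a 0 = idn a" using brsym[of 0 a] by simp
  have "idn a = br 0 a \<odot> (br a 0 \<odot> br a 0)" using h s by simp
  also have "\<dots> = (br 0 a \<odot> br a 0) \<odot> br a 0" by (rule cassoc) simp_all
  also have "\<dots> = br a 0" using s idl[of "br a 0" a] by simp
  finally show ?thesis by simp
qed

lemma br0': "br 0 a = idn a"
proof -
  have h: "br 0 a = br 0 a \<odot> br 0 a"
    using hexb[of 0 0 a] by (simp add: tidn0l tidn0r)
  have s: "br a 0 \<odot> br 0 a = idn a" using brsym[of a 0] by simp
  have "idn a = br a 0 \<odot> (br 0 a \<odot> br 0 a)" using h s by simp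
  also have "\<dots> = (br a 0 \<odot> br 0 a) \<odot> br 0 a" by (rule cassoc) simp_all
  also have "\<dots> = br 0 a" using s idl[of "br 0 a" a] by simp
  finally show ?thesis by simp
qed


lemma cR: "valid x \<Longrightarrow> valid y \<Longrightarrow> valid z \<Longrightarrow> cd x = dm y \<Longrightarrow> cd y = dm z \<Longrightarrow>
   (z \<odot> y) \<odot> x = z \<odot> (y \<odot> x)"
  using cassoc by simp
lemma inter2: "valid f \<Longrightarrow> valid g \<Longrightarrow> valid f' \<Longrightarrow> valid g' \<Longrightarrow> valid r \<Longrightarrow> cd f = dm g \<Longrightarrow> cd f' = dm g' \<Longrightarrow>
   cd r = dm f + dm f' \<Longrightarrow>
   (g \<boxtimes> g') \<odot> ((f \<boxtimes> f') \<odot> r) = ((g \<odot> f) \<boxtimes> (g' \<odot> f')) \<odot> r"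
  by (simp add: cassoc inter)
lemma tidnA: "valid x \<Longrightarrow> idn a \<boxtimes> (idn b \<boxtimes> x) = idn (a + b) \<boxtimes> x"
  using tassoc[of "idn a" "idn b" x] tidn by simp
lemma tL: "valid x \<Longrightarrow> valid y \<Longrightarrow> valid z \<Longrightarrow> x \<boxtimes> (y \<boxtimes> z) = (x \<boxtimes> y) \<boxtimes> z"
  using tassoc by simp
lemma spl1: "valid f \<Longrightarrow> valid g \<Longrightarrow> f \<boxtimes> g = (f \<boxtimes> idn (cd g)) \<odot> (idn (dm f) \<boxtimes> g)"
  by (simp add: inter idl idr)
lemma spl2: "valid f \<Longrightarrow> valid g \<Longrightarrow> f \<boxtimes> g = (idn (cd f) \<boxtimes> g) \<odot> (f \<boxtimes> idn (dm g))"
  by (simp add: inter idl idr)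
lemma unmerge: "valid f \<Longrightarrow> valid g \<Longrightarrow> valid f' \<Longrightarrow> valid g' \<Longrightarrow> cd f = dm g \<Longrightarrow> cd f' = dm g' \<Longrightarrow>
   (g \<odot> f) \<boxtimes> (g' \<odot> f') = (g \<boxtimes> g') \<odot> (f \<boxtimes> f')"
  by (simp add: inter)

lemma mI1: "valid g \<Longrightarrow> valid G \<Longrightarrow> valid F \<Longrightarrow> dm g \<le> n \<Longrightarrow> dm G = n - dm g + cd F \<Longrightarrow>
   (g \<boxtimes> G) \<odot> (idn n \<boxtimes> F) = g \<boxtimes> (G \<odot> (idn (n - dm g) \<boxtimes> F))"
proof -
  assume a: "valid g" "valid G" "valid F" "dm g \<le> n" "dm G = n - dm g + cd F"
  have "idn n = idn (dm g) \<boxtimes> idn (n - dm g)" using a(4) by (simp add: tidn)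
  then have "(g \<boxtimes> G) \<odot> (idn n \<boxtimes> F) = (g \<boxtimes> G) \<odot> (idn (dm g) \<boxtimes> (idn (n - dm g) \<boxtimes> F))"
    using a by (simp add: tassoc)
  also have "\<dots> = g \<boxtimes> (G \<odot> (idn (n - dm g) \<boxtimes> F))" using a by (simp add: inter idr)
  finally show ?thesis .
qed
lemma mI2: "valid f \<Longrightarrow> valid G \<Longrightarrow> valid F \<Longrightarrow> cd f \<le> n \<Longrightarrow> cd F = n - cd f + dm G \<Longrightarrow>
   (idn n \<boxtimes> G) \<odot> (f \<boxtimes> F) = f \<boxtimes> ((idn (n - cd f) \<boxtimes> G) \<odot> F)"
proof -
  assume a: "valid f" "valid G" "valid F" "cd f \<le> n" "cd F = n - cd f + dm G"
  have "idn n = idn (cd f) \<boxtimes> idn (n - cd f)" using a(4) by (simp add: tidn)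
  then have "(idn n \<boxtimes> G) \<odot> (f \<boxtimes> F) = (idn (cd f) \<boxtimes> (idn (n - cd f) \<boxtimes> G)) \<odot> (f \<boxtimes> F)"
    using a by (simp add: tassoc)
  also have "\<dots> = f \<boxtimes> ((idn (n - cd f) \<boxtimes> G) \<odot> F)" using a by (simp add: inter idl)
  finally show ?thesis .
qed
lemma mI1c: "valid g \<Longrightarrow> valid G \<Longrightarrow> valid F \<Longrightarrow> valid r \<Longrightarrow> dm g \<le> n \<Longrightarrow> dm G = n - dm g + cd F \<Longrightarrow>
   cd r = n + dm F \<Longrightarrow>
   (g \<boxtimes> G) \<odot> ((idn n \<boxtimes> F) \<odot> r) = (g \<boxtimes> (G \<odot> (idn (n - dm g) \<boxtimes> F))) \<odot> r"
  by (simp add: cassoc mI1)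
lemma mI2c: "valid f \<Longrightarrow> valid G \<Longrightarrow> valid F \<Longrightarrow> valid r \<Longrightarrow> cd f \<le> n \<Longrightarrow> cd F = n - cd f + dm G \<Longrightarrow>
   cd r = dm f + dm F \<Longrightarrow>
   (idn n \<boxtimes> G) \<odot> ((f \<boxtimes> F) \<odot> r) = (f \<boxtimes> ((idn (n - cd f) \<boxtimes> G) \<odot> F)) \<odot> r"
  by (simp add: cassoc mI2)

lemma pa1: "valid g \<Longrightarrow> valid F \<Longrightarrow> cd F = 0 \<Longrightarrow> n = dm g \<Longrightarrow> g \<odot> (idn n \<boxtimes> F) = g \<boxtimes> F"
  using inter[of "idn (dm g)" g F "idn 0"] by (simp add: idl idr tidn0r)
lemma pa2: "valid g \<Longrightarrow> valid F \<Longrightarrow> cd F = 0 \<Longrightarrow> n = dm g \<Longrightarrow> g \<odot> (F \<boxtimes> idn n) = F \<boxtimes> g"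
  using inter[of F "idn 0" "idn (dm g)" g] by (simp add: idl idr tidn0l)
lemma pa3: "valid f \<Longrightarrow> valid G \<Longrightarrow> dm G = 0 \<Longrightarrow> n = cd f \<Longrightarrow> (idn n \<boxtimes> G) \<odot> f = f \<boxtimes> G"
  using inter[of f "idn (cd f)" "idn 0" G] by (simp add: idl idr tidn0r)
lemma pa4: "valid f \<Longrightarrow> valid G \<Longrightarrow> dm G = 0 \<Longrightarrow> n = cd f \<Longrightarrow> (G \<boxtimes> idn n) \<odot> f = G \<boxtimes> f"
  using inter[of "idn 0" G f "idn (cd f)"] by (simp add: idl idr tidn0l)
lemma pa1c: "valid g \<Longrightarrow> valid F \<Longrightarrow> valid r \<Longrightarrow> cd F = 0 \<Longrightarrow> n = dm g \<Longrightarrow> cd r = n + dm F \<Longrightarrow>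
   g \<odot> ((idn n \<boxtimes> F) \<odot> r) = (g \<boxtimes> F) \<odot> r"
  by (simp add: cassoc pa1)
lemma pa2c: "valid g \<Longrightarrow> valid F \<Longrightarrow> valid r \<Longrightarrow> cd F = 0 \<Longrightarrow> n = dm g \<Longrightarrow> cd r = dm F + n \<Longrightarrow>
   g \<odot> ((F \<boxtimes> idn n) \<odot> r) = (F \<boxtimes> g) \<odot> r"
  by (simp add: cassoc pa2)
lemmas pa = pa1 pa2 pa1c pa2c
lemmas nf = cR tassoc tidn tidnA tidn0l tidn0r idl idr inter inter2 mI1 mI1c mI2 mI2c pa1 pa2 pa1c pa2c
lemmas st = cR inter inter2 idl idr tidn tidn0l tidn0r tassoc tidnA
lemma ctx2: "A \<odot> B = A' \<odot> B' \<Longrightarrow> valid A \<Longrightarrow> valid B \<Longrightarrow> valid A' \<Longrightarrow> valid B' \<Longrightarrow> valid r \<Longrightarrow>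
   cd B = dm A \<Longrightarrow> cd B' = dm A' \<Longrightarrow> cd r = dm B \<Longrightarrow> cd r = dm B' \<Longrightarrow> A \<odot> (B \<odot> r) = A' \<odot> (B' \<odot> r)"
  using cassoc[of r B A] cassoc[of r B' A'] by simp
lemma ctx21: "A \<odot> B = A' \<Longrightarrow> valid A \<Longrightarrow> valid B \<Longrightarrow> valid r \<Longrightarrow>
   cd B = dm A \<Longrightarrow> cd r = dm B \<Longrightarrow> A \<odot> (B \<odot> r) = A' \<odot> r"
  using cassoc[of r B A] by simp
lemma ctx3: "A \<odot> B \<odot> E = A' \<Longrightarrow> valid A \<Longrightarrow> valid B \<Longrightarrow> valid E \<Longrightarrow> valid r \<Longrightarrow>
   cd B = dm A \<Longrightarrow> cd E = dm B \<Longrightarrow> cd r = dm E \<Longrightarrow> A \<odot> (B \<odot> (E \<odot> r)) = A' \<odot> r"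
  using cassoc[of r E B] cassoc[of r "B \<odot> E" A] by simp
lemma id2: "idn 2 = idn (Suc 0) \<boxtimes> idn (Suc 0)" using tidn[of "Suc 0" "Suc 0"] by simp

end

locale hp = sm C H for C :: "('o,'m) smc" and H +
  fixes m u d e S Lam lam
  assumes hopf: "is_hopf_algebra C H m u d e S"
  and tLam: "Lam \<in> Hom C (Uo C) H" and tlam: "lam \<in> Hom C H (Uo C)"
  and LI: "Cmp C m (TM C (Idm C H) Lam) = Cmp C Lam e"
  and RC: "Cmp C (TM C lam (Idm C H)) d = Cmp C u lam"
  and N: "Cmp C lam Lam = Idm C (Uo C)"
begin

lemma hax: 
 "m \<in> Hom C (TO C H H) H" "u \<in> Hom C (Uo C) H"
 "Cmp C m (TM C m (Idm C H)) = Cmp C m (TM C (Idm C H) m)"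
 "Cmp C m (TM C u (Idm C H)) = Idm C H" "Cmp C m (TM C (Idm C H) u) = Idm C H"
 "d \<in> Hom C H (TO C H H)" "e \<in> Hom C H (Uo C)"
 "Cmp C (TM C d (Idm C H)) d = Cmp C (TM C (Idm C H) d) d"
 "Cmp C (TM C e (Idm C H)) d = Idm C H" "Cmp C (TM C (Idm C H) e) d = Idm C H"
 "S \<in> Hom C H H"
 "Cmp C d m = Cmp C (TM C m m) (Cmp C (TM C (Idm C H) (TM C (Br C H H) (Idm C H))) (TM C d d))"
 "Cmp C d u = TM C u u" "Cmp C e m = TM C e e" "Cmp C e u = Idm C (Uo C)"
 "Cmp C m (Cmp C (TM C S (Idm C H)) d) = Cmp C u e"
 "Cmp C m (Cmp C (TM C (Idm C H) S) d) = Cmp C u e"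
  using hopf unfolding is_hopf_algebra_def is_algebra_def is_coalgebra_def by auto

abbreviation "mm \<equiv> Ar 2 (Suc 0) m"
abbreviation "uu \<equiv> Ar 0 (Suc 0) u"
abbreviation "dd \<equiv> Ar (Suc 0) 2 d"
abbreviation "ee \<equiv> Ar (Suc 0) 0 e"
abbreviation "SS \<equiv> Ar (Suc 0) (Suc 0) S"
abbreviation "LL \<equiv> Ar 0 (Suc 0) Lam"
abbreviation "ll \<equiv> Ar (Suc 0) 0 lam"
abbreviation "ii \<equiv> idn (Suc 0)"
abbreviation "cc \<equiv> br (Suc 0) (Suc 0)"

lemma P2: "P 2 = TO C H H" by (simp del: nums add: numeral_2_eq_2 PS)

lemma valid_gen[simp]: "valid mm" "valid uu" "valid dd" "valid ee" "valid SS" "valid LL" "valid ll"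
  unfolding valid_def using hax tLam tlam by (simp_all add: P2)

lemma A1: "mm \<odot> (mm \<boxtimes> ii) = mm \<odot> (ii \<boxtimes> mm)"
  using hax(3) by (intro ar_eq) (simp_all add: comp_def tens_def idn_def)
lemma A2: "mm \<odot> (uu \<boxtimes> ii) = ii"
  using hax(4) by (intro ar_eq) (simp_all add: comp_def tens_def idn_def)
lemma A3: "mm \<odot> (ii \<boxtimes> uu) = ii"
  using hax(5) by (intro ar_eq) (simp_all add: comp_def tens_def idn_def)
lemma C1: "(dd \<boxtimes> ii) \<odot> dd = (ii \<boxtimes> dd) \<odot> dd"
  using hax(8) by (intro ar_eq) (simp_all add: comp_def tens_def idn_def)
lemma C2: "(ee \<boxtimes> ii) \<odot> dd = ii"
  using hax(9) by (intro ar_eq) (simp_all add: comp_def tens_def idn_def)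
lemma C3: "(ii \<boxtimes> ee) \<odot> dd = ii"
  using hax(10) by (intro ar_eq) (simp_all add: comp_def tens_def idn_def)
lemma B1: "dd \<odot> mm = (mm \<boxtimes> mm) \<odot> (ii \<boxtimes> cc \<boxtimes> ii) \<odot> (dd \<boxtimes> dd)"
  using hax(12) by (intro ar_eq) (simp_all add: comp_def tens_def idn_def br_def)
lemma B2: "dd \<odot> uu = uu \<boxtimes> uu"
  using hax(13) by (intro ar_eq) (simp_all add: comp_def tens_def idn_def)
lemma B3: "ee \<odot> mm = ee \<boxtimes> ee"
  using hax(14) by (intro ar_eq) (simp_all add: comp_def tens_def idn_def)
lemma B4: "ee \<odot> uu = idn 0"
  using hax(15) by (intro ar_eq) (simp_all add: comp_def tens_def idn_def)
lemma S1: "mm \<odot> (SS \<boxtimes> ii) \<odot> dd = uu \<odot> ee"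
  using hax(16) by (intro ar_eq) (simp_all add: comp_def tens_def idn_def)
lemma S2: "mm \<odot> (ii \<boxtimes> SS) \<odot> dd = uu \<odot> ee"
  using hax(17) by (intro ar_eq) (simp_all add: comp_def tens_def idn_def)
lemma LIa: "mm \<odot> (ii \<boxtimes> LL) = LL \<odot> ee"
  using LI by (intro ar_eq) (simp_all add: comp_def tens_def idn_def)
lemma RCa: "(ll \<boxtimes> ii) \<odot> dd = uu \<odot> ll"
  using RC by (intro ar_eq) (simp_all add: comp_def tens_def idn_def)
lemma Na: "ll \<odot> LL = idn 0"
  using N by (intro ar_eq) (simp_all add: comp_def tens_def idn_def)

end


context hp begin
definition "Phi = (ii \<boxtimes> mm) \<odot> (ii \<boxtimes> SS \<boxtimes> ii) \<odot> (dd \<boxtimes> ii)"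
definition "Phi' = (ii \<boxtimes> mm) \<odot> (dd \<boxtimes> ii)"
definition "DD = (mm \<boxtimes> SS) \<odot> (ii \<boxtimes> (dd \<odot> LL))"
lemma vPhi[simp]: "valid Phi" "dm Phi = 2" "cd Phi = 2" unfolding Phi_def by simp_all
lemma vPhi'[simp]: "valid Phi'" "dm Phi' = 2" "cd Phi' = 2" unfolding Phi'_def by simp_all
lemma vDD[simp]: "valid DD" "dm DD = Suc 0" "cd DD = 2" unfolding DD_def by simp_all

lemma id3: "idn 3 = idn 2 \<boxtimes> ii" using tidn[of 2 "Suc 0"] by simp
lemma C1c: "valid r \<Longrightarrow> cd r = Suc 0 \<Longrightarrow> (dd \<boxtimes> ii) \<odot> (dd \<odot> r) = (ii \<boxtimes> dd) \<odot> (dd \<odot> r)"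
  by (rule ctx2[OF C1]) simp_all
lemma C2c: "valid r \<Longrightarrow> cd r = Suc 0 \<Longrightarrow> (ee \<boxtimes> ii) \<odot> (dd \<odot> r) = r"
  using ctx21[OF C2, of r] by (simp add: idl)
lemma C3c: "valid r \<Longrightarrow> cd r = Suc 0 \<Longrightarrow> (ii \<boxtimes> ee) \<odot> (dd \<odot> r) = r"
  using ctx21[OF C3, of r] by (simp add: idl)
lemma E1: "mm \<odot> ((uu \<odot> ee) \<boxtimes> ii) = ee \<boxtimes> ii"
proof -
  have "mm \<odot> ((uu \<odot> ee) \<boxtimes> ii) = (mm \<odot> (uu \<boxtimes> ii)) \<odot> (ee \<boxtimes> ii)" by (simp add: inter idl idr cR)
  then show ?thesis by (simp add: A2 idl)
qed
lemma E1': "mm \<odot> (ii \<boxtimes> (uu \<odot> ee)) = ii \<boxtimes> ee"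
proof -
  have "mm \<odot> (ii \<boxtimes> (uu \<odot> ee)) = (mm \<odot> (ii \<boxtimes> uu)) \<odot> (ii \<boxtimes> ee)" by (simp add: inter idl idr cR)
  then show ?thesis by (simp add: A3 idl)
qed
lemma E2: "(ii \<boxtimes> ee \<boxtimes> ii) \<odot> (dd \<boxtimes> ii) = idn 2"
proof -
  have "(ii \<boxtimes> ee \<boxtimes> ii) \<odot> (dd \<boxtimes> ii) = ((ii \<boxtimes> ee) \<odot> dd) \<boxtimes> ii" by (simp add: tL inter idl idr)
  then show ?thesis by (simp add: C3 id2)
qed
lemma sw1: "(dd \<boxtimes> ii) \<odot> (ii \<boxtimes> mm) = (idn 2 \<boxtimes> mm) \<odot> (dd \<boxtimes> idn 2)" by (simp add: st)

lemma Gal1: "Phi \<odot> Phi' = idn 2"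
proof -
  have 2: "(ii \<boxtimes> SS \<boxtimes> ii) \<odot> (idn 2 \<boxtimes> mm) = ii \<boxtimes> SS \<boxtimes> mm"
    by (simp add: id2 inter idl idr tassoc)
  have 3: "(ii \<boxtimes> mm) \<odot> (ii \<boxtimes> SS \<boxtimes> mm) = ii \<boxtimes> (mm \<odot> (SS \<boxtimes> mm))"
    by (simp add: inter idl idr)
  have 4: "(dd \<boxtimes> idn 2) \<odot> (dd \<boxtimes> ii) = (ii \<boxtimes> dd \<boxtimes> ii) \<odot> (dd \<boxtimes> ii)"
  proof -
    have "(dd \<boxtimes> idn 2) \<odot> (dd \<boxtimes> ii) = ((dd \<boxtimes> ii) \<odot> dd) \<boxtimes> ii"
      by (simp add: id2 tL inter idl idr)
    also have "\<dots> = ((ii \<boxtimes> dd) \<odot> dd) \<boxtimes> ii" by (simp add: C1)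
    also have "\<dots> = (ii \<boxtimes> dd \<boxtimes> ii) \<odot> (dd \<boxtimes> ii)"
      by (simp add: inter idl idr tL)
    finally show ?thesis .
  qed
  have 5: "(ii \<boxtimes> (mm \<odot> (SS \<boxtimes> mm))) \<odot> (ii \<boxtimes> dd \<boxtimes> ii) = ii \<boxtimes> (mm \<odot> (SS \<boxtimes> mm) \<odot> (dd \<boxtimes> ii))"
    by (simp add: inter idl idr cR)
  have 6: "mm \<odot> (SS \<boxtimes> mm) \<odot> (dd \<boxtimes> ii) = ee \<boxtimes> ii"
  proof -
    have "mm \<odot> (SS \<boxtimes> mm) \<odot> (dd \<boxtimes> ii) = (mm \<odot> (ii \<boxtimes> mm)) \<odot> (SS \<boxtimes> idn 2) \<odot> (dd \<boxtimes> ii)"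
      by (simp add: inter inter2 idl idr cR)
    also have "\<dots> = (mm \<odot> (mm \<boxtimes> ii)) \<odot> (SS \<boxtimes> idn 2) \<odot> (dd \<boxtimes> ii)"
      by (simp add: A1)
    also have "\<dots> = mm \<odot> ((mm \<odot> (SS \<boxtimes> ii) \<odot> dd) \<boxtimes> ii)"
      by (simp add: id2 tL inter idl idr cR)
    also have "\<dots> = mm \<odot> ((uu \<odot> ee) \<boxtimes> ii)" by (simp add: S1)
    also have "\<dots> = ee \<boxtimes> ii" by (rule E1)
    finally show ?thesis .
  qed
  have "Phi \<odot> Phi' = (ii \<boxtimes> mm) \<odot> (ii \<boxtimes> SS \<boxtimes> ii) \<odot> (idn 2 \<boxtimes> mm) \<odot> (dd \<boxtimes> idn 2) \<odot> (dd \<boxtimes> ii)"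
    unfolding Phi_def Phi'_def by (simp add: cR sw1 ctx2[OF sw1])
  also have "\<dots> = (ii \<boxtimes> mm) \<odot> (ii \<boxtimes> SS \<boxtimes> mm) \<odot> (dd \<boxtimes> idn 2) \<odot> (dd \<boxtimes> ii)"
    by (simp add: cR 2 ctx21[OF 2])
  also have "\<dots> = ii \<boxtimes> (mm \<odot> (SS \<boxtimes> mm)) \<odot> (ii \<boxtimes> dd \<boxtimes> ii) \<odot> (dd \<boxtimes> ii)"
    by (simp add: cR 3 ctx21[OF 3] 4)
  also have "\<dots> = ii \<boxtimes> (ee \<boxtimes> ii) \<odot> (dd \<boxtimes> ii)"
    by (simp add: cR 5 ctx21[OF 5] 6)
  also have "\<dots> = idn 2" by (rule E2)
  finally show ?thesis .
qed

lemma Gal2: "Phi' \<odot> Phi = idn 2"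
proof -
  have G1: "(ii \<boxtimes> mm) \<odot> (idn 2 \<boxtimes> mm) = ii \<boxtimes> (mm \<odot> (mm \<boxtimes> ii))"
    by (simp add: id2 tassoc inter idl idr A1)
  have G2: "(dd \<boxtimes> idn 2) \<odot> (ii \<boxtimes> SS \<boxtimes> ii) = dd \<boxtimes> SS \<boxtimes> ii"
    by (simp add: id2 inter idl idr)
  have h2: "dd \<boxtimes> SS = (idn 2 \<boxtimes> SS) \<odot> (dd \<boxtimes> ii)" by (simp add: inter idl idr)
  have G3: "(dd \<boxtimes> SS \<boxtimes> ii) \<odot> (dd \<boxtimes> ii) = (ii \<boxtimes> ((ii \<boxtimes> SS) \<odot> dd) \<boxtimes> ii) \<odot> (dd \<boxtimes> ii)"
  proof -
    have "(dd \<boxtimes> SS \<boxtimes> ii) \<odot> (dd \<boxtimes> ii) = ((dd \<boxtimes> SS) \<odot> dd) \<boxtimes> ii" by (simp add: tL inter idl idr)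
    also have "(dd \<boxtimes> SS) \<odot> dd = (idn 2 \<boxtimes> SS) \<odot> (ii \<boxtimes> dd) \<odot> dd" using h2 C1 by (simp add: cR)
    also have "\<dots> = (ii \<boxtimes> ((ii \<boxtimes> SS) \<odot> dd)) \<odot> dd" by (simp add: id2 tassoc inter inter2 idl idr cR)
    also have "((ii \<boxtimes> ((ii \<boxtimes> SS) \<odot> dd)) \<odot> dd) \<boxtimes> ii = (ii \<boxtimes> ((ii \<boxtimes> SS) \<odot> dd) \<boxtimes> ii) \<odot> (dd \<boxtimes> ii)"
      by (simp add: tL inter idl idr)
    finally show ?thesis .
  qed
  have G4: "(ii \<boxtimes> (mm \<odot> (mm \<boxtimes> ii))) \<odot> (ii \<boxtimes> ((ii \<boxtimes> SS) \<odot> dd) \<boxtimes> ii) = ii \<boxtimes> (ee \<boxtimes> ii)"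
    by (simp add: inter idl idr cR S2 E1)
  have "Phi' \<odot> Phi = (ii \<boxtimes> mm) \<odot> (idn 2 \<boxtimes> mm) \<odot> (dd \<boxtimes> idn 2) \<odot> (ii \<boxtimes> SS \<boxtimes> ii) \<odot> (dd \<boxtimes> ii)"
    unfolding Phi_def Phi'_def by (simp add: cR sw1 ctx2[OF sw1])
  also have "\<dots> = ii \<boxtimes> (mm \<odot> (mm \<boxtimes> ii)) \<odot> (dd \<boxtimes> SS \<boxtimes> ii) \<odot> (dd \<boxtimes> ii)"
    by (simp add: cR G1 ctx21[OF G1] G2 ctx21[OF G2])
  also have "\<dots> = ii \<boxtimes> (mm \<odot> (mm \<boxtimes> ii)) \<odot> (ii \<boxtimes> ((ii \<boxtimes> SS) \<odot> dd) \<boxtimes> ii) \<odot> (dd \<boxtimes> ii)"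
    by (simp add: cR G3)
  also have "\<dots> = ii \<boxtimes> (ee \<boxtimes> ii) \<odot> (dd \<boxtimes> ii)"
    by (simp add: cR G4 ctx21[OF G4])
  also have "\<dots> = idn 2" by (rule E2)
  finally show ?thesis .
qed

lemma brLL: "cc \<odot> (ii \<boxtimes> LL) = LL \<boxtimes> ii"
  using brnat[of ii LL "Suc 0" "Suc 0"] by (simp add: br0 idr)
lemma brll: "(ll \<boxtimes> ii) \<odot> cc = ii \<boxtimes> ll"
  using brnat[of ii ll "Suc 0" 0] by (simp add: br0 idl)

lemma T: "Phi' \<odot> DD = LL \<boxtimes> ii"
proof -
  have T1: "(dd \<boxtimes> ii) \<odot> (mm \<boxtimes> SS) = ((mm \<boxtimes> mm) \<boxtimes> SS) \<odot> ((ii \<boxtimes> cc \<boxtimes> ii) \<boxtimes> ii) \<odot> ((dd \<boxtimes> dd) \<boxtimes> ii)"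
    by (simp add: inter idl idr cR B1)
  have T2a: "mm \<odot> (mm \<boxtimes> SS) = mm \<odot> (ii \<boxtimes> (mm \<odot> (ii \<boxtimes> SS)))"
  proof -
    have "mm \<boxtimes> SS = (mm \<boxtimes> ii) \<odot> (idn 2 \<boxtimes> SS)" by (simp add: inter idl idr)
    then have "mm \<odot> (mm \<boxtimes> SS) = mm \<odot> (mm \<boxtimes> ii) \<odot> (idn 2 \<boxtimes> SS)" by simp
    also have "\<dots> = mm \<odot> (ii \<boxtimes> mm) \<odot> (idn 2 \<boxtimes> SS)" by (simp add: cR A1 ctx2[OF A1])
    also have "\<dots> = mm \<odot> (ii \<boxtimes> (mm \<odot> (ii \<boxtimes> SS)))" by (simp add: id2 tassoc inter idl idr)
    finally show ?thesis .
  qed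
  have T2: "(ii \<boxtimes> mm) \<odot> ((mm \<boxtimes> mm) \<boxtimes> SS) = mm \<boxtimes> (mm \<odot> (ii \<boxtimes> (mm \<odot> (ii \<boxtimes> SS))))"
    by (simp add: tassoc inter idl idr T2a)
  have T3: "((dd \<boxtimes> dd) \<boxtimes> ii) \<odot> (ii \<boxtimes> (dd \<odot> LL)) = (idn 3 \<boxtimes> dd) \<odot> (dd \<boxtimes> (dd \<odot> LL))"
    by (simp add: tassoc inter idl idr C1c id3)
  have T4: "((ii \<boxtimes> cc \<boxtimes> ii) \<boxtimes> ii) \<odot> (idn 3 \<boxtimes> dd) = (idn 3 \<boxtimes> dd) \<odot> (ii \<boxtimes> cc \<boxtimes> ii)"
    by (simp add: nf)
  have T5: "(mm \<boxtimes> (mm \<odot> (ii \<boxtimes> (mm \<odot> (ii \<boxtimes> SS))))) \<odot> (idn 3 \<boxtimes> dd) = mm \<boxtimes> (ii \<boxtimes> ee)"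
    by (simp add: nf S2 E1')
  have T6: "mm \<boxtimes> (ii \<boxtimes> ee) = (mm \<boxtimes> ii) \<odot> (idn 3 \<boxtimes> ee)" by (simp add: nf)
  have T7: "(idn 3 \<boxtimes> ee) \<odot> (ii \<boxtimes> cc \<boxtimes> ii) = (ii \<boxtimes> cc) \<odot> (idn 3 \<boxtimes> ee)" by (simp add: nf)
  have T8: "(idn 3 \<boxtimes> ee) \<odot> (dd \<boxtimes> (dd \<odot> LL)) = dd \<boxtimes> LL" by (simp add: nf C3c)
  have T9: "(ii \<boxtimes> cc) \<odot> (dd \<boxtimes> LL) = (ii \<boxtimes> LL \<boxtimes> ii) \<odot> dd"
  proof -
    have "dd \<boxtimes> LL = (idn 2 \<boxtimes> LL) \<odot> dd" by (simp add: pa3)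
    then have "(ii \<boxtimes> cc) \<odot> (dd \<boxtimes> LL) = ((ii \<boxtimes> cc) \<odot> (idn 2 \<boxtimes> LL)) \<odot> dd" by (simp add: cassoc)
    also have "(ii \<boxtimes> cc) \<odot> (idn 2 \<boxtimes> LL) = ii \<boxtimes> (cc \<odot> (ii \<boxtimes> LL))" by (simp add: nf)
    finally show ?thesis by (simp add: brLL)
  qed
  have T10: "(mm \<boxtimes> ii) \<odot> (ii \<boxtimes> LL \<boxtimes> ii) \<odot> dd = LL \<boxtimes> ii"
  proof -
    have "(mm \<boxtimes> ii) \<odot> (ii \<boxtimes> LL \<boxtimes> ii) = (mm \<odot> (ii \<boxtimes> LL)) \<boxtimes> ii" by (simp add: tL inter idl idr)
    then have "(mm \<boxtimes> ii) \<odot> (ii \<boxtimes> LL \<boxtimes> ii) \<odot> dd = ((LL \<odot> ee) \<boxtimes> ii) \<odot> dd" by (simp add: cassoc LIa)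
    also have "\<dots> = (LL \<boxtimes> ii) \<odot> (ee \<boxtimes> ii) \<odot> dd" by (simp add: inter inter2 idl idr cR)
    also have "\<dots> = LL \<boxtimes> ii" by (simp add: C2 idr)
    finally show ?thesis .
  qed
  have "Phi' \<odot> DD = (ii \<boxtimes> mm) \<odot> (dd \<boxtimes> ii) \<odot> (mm \<boxtimes> SS) \<odot> (ii \<boxtimes> (dd \<odot> LL))"
    unfolding Phi'_def DD_def by (simp add: cR)
  also have "\<dots> = (ii \<boxtimes> mm) \<odot> ((mm \<boxtimes> mm) \<boxtimes> SS) \<odot> ((ii \<boxtimes> cc \<boxtimes> ii) \<boxtimes> ii) \<odot> ((dd \<boxtimes> dd) \<boxtimes> ii) \<odot> (ii \<boxtimes> (dd \<odot> LL))"
    by (simp add: cR T1 ctx21[OF T1])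
  also have "\<dots> = (mm \<boxtimes> (mm \<odot> (ii \<boxtimes> (mm \<odot> (ii \<boxtimes> SS))))) \<odot> ((ii \<boxtimes> cc \<boxtimes> ii) \<boxtimes> ii) \<odot> ((dd \<boxtimes> dd) \<boxtimes> ii) \<odot> (ii \<boxtimes> (dd \<odot> LL))"
    by (simp add: cR T2 ctx21[OF T2])
  also have "\<dots> = (mm \<boxtimes> (mm \<odot> (ii \<boxtimes> (mm \<odot> (ii \<boxtimes> SS))))) \<odot> ((ii \<boxtimes> cc \<boxtimes> ii) \<boxtimes> ii) \<odot> (idn 3 \<boxtimes> dd) \<odot> (dd \<boxtimes> (dd \<odot> LL))"
    by (simp add: cR T3)
  also have "\<dots> = (mm \<boxtimes> (mm \<odot> (ii \<boxtimes> (mm \<odot> (ii \<boxtimes> SS))))) \<odot> (idn 3 \<boxtimes> dd) \<odot> (ii \<boxtimes> cc \<boxtimes> ii) \<odot> (dd \<boxtimes> (dd \<odot> LL))"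
    by (simp add: cR T4 ctx2[OF T4])
  also have "\<dots> = (mm \<boxtimes> (ii \<boxtimes> ee)) \<odot> (ii \<boxtimes> cc \<boxtimes> ii) \<odot> (dd \<boxtimes> (dd \<odot> LL))"
    by (simp add: cR T5 ctx21[OF T5])
  also have "\<dots> = (mm \<boxtimes> ii) \<odot> (idn 3 \<boxtimes> ee) \<odot> (ii \<boxtimes> cc \<boxtimes> ii) \<odot> (dd \<boxtimes> (dd \<odot> LL))"
    by (simp add: T6 cR)
  also have "\<dots> = (mm \<boxtimes> ii) \<odot> (ii \<boxtimes> cc) \<odot> (idn 3 \<boxtimes> ee) \<odot> (dd \<boxtimes> (dd \<odot> LL))"
    by (simp add: cR T7 ctx2[OF T7])
  also have "\<dots> = (mm \<boxtimes> ii) \<odot> (ii \<boxtimes> cc) \<odot> (dd \<boxtimes> LL)"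
    by (simp add: cR T8)
  also have "\<dots> = (mm \<boxtimes> ii) \<odot> (ii \<boxtimes> LL \<boxtimes> ii) \<odot> dd"
    by (simp add: cR T9)
  also have "\<dots> = LL \<boxtimes> ii" by (simp add: T10)
  finally show ?thesis .
qed

definition "Ds = ((ll \<odot> mm) \<boxtimes> ii) \<odot> (SS \<boxtimes> dd)"
definition "XX = (ii \<boxtimes> SS) \<odot> dd \<odot> LL"
lemma vDs[simp]: "valid Ds" "dm Ds = 2" "cd Ds = Suc 0" unfolding Ds_def by simp_all
lemma vXX[simp]: "valid XX" "dm XX = 0" "cd XX = 2" unfolding XX_def by simp_all
lemma id3b: "idn 3 = ii \<boxtimes> idn 2" using tidn[of "Suc 0" 2] by simp
lemma E3: "mm \<odot> (ii \<boxtimes> (uu \<odot> ll)) = ii \<boxtimes> ll"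
proof -
  have "mm \<odot> (ii \<boxtimes> (uu \<odot> ll)) = (mm \<odot> (ii \<boxtimes> uu)) \<odot> (ii \<boxtimes> ll)" by (simp add: inter idl idr cR)
  then show ?thesis by (simp add: A3 idl)
qed
lemma E4: "mm \<odot> ((uu \<odot> ll) \<boxtimes> ii) = ll \<boxtimes> ii"
proof -
  have "mm \<odot> ((uu \<odot> ll) \<boxtimes> ii) = (mm \<odot> (uu \<boxtimes> ii)) \<odot> (ll \<boxtimes> ii)" by (simp add: inter idl idr cR)
  then show ?thesis by (simp add: A2 idl)
qed

lemma W: "Ds \<odot> Phi' = ii \<boxtimes> ll"
proof -
  let ?K = "ll \<odot> mm \<odot> ((mm \<odot> (SS \<boxtimes> ii)) \<boxtimes> ii)"
  have W1: "(SS \<boxtimes> dd) \<odot> (ii \<boxtimes> mm) = (SS \<boxtimes> (mm \<boxtimes> mm)) \<odot> (ii \<boxtimes> (ii \<boxtimes> cc \<boxtimes> ii)) \<odot> (ii \<boxtimes> (dd \<boxtimes> dd))"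
    by (simp add: inter inter2 idl idr cR B1)
  have W2a: "mm \<odot> (SS \<boxtimes> mm) = mm \<odot> ((mm \<odot> (SS \<boxtimes> ii)) \<boxtimes> ii)"
  proof -
    have "mm \<odot> (SS \<boxtimes> mm) = (mm \<odot> (ii \<boxtimes> mm)) \<odot> (SS \<boxtimes> idn 2)" by (simp add: inter inter2 idl idr cR)
    also have "\<dots> = (mm \<odot> (mm \<boxtimes> ii)) \<odot> (SS \<boxtimes> idn 2)" by (simp add: A1)
    also have "\<dots> = mm \<odot> ((mm \<odot> (SS \<boxtimes> ii)) \<boxtimes> ii)" by (simp add: id2 tL inter idl idr cR)
    finally show ?thesis .
  qed
  have W2: "((ll \<odot> mm) \<boxtimes> ii) \<odot> (SS \<boxtimes> (mm \<boxtimes> mm)) = ?K \<boxtimes> mm"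
    by (simp add: tL inter idl idr cR W2a)
  have W3: "(ii \<boxtimes> (dd \<boxtimes> dd)) \<odot> (dd \<boxtimes> ii) = (dd \<boxtimes> ii \<boxtimes> dd) \<odot> (dd \<boxtimes> ii)"
    by (simp add: tL inter idl idr C1)
  have W4: "(ii \<boxtimes> (ii \<boxtimes> cc \<boxtimes> ii)) \<odot> (dd \<boxtimes> ii \<boxtimes> dd) = (dd \<boxtimes> idn 3) \<odot> (ii \<boxtimes> cc \<boxtimes> ii) \<odot> (ii \<boxtimes> ii \<boxtimes> dd)"
    by (simp add: nf)
  have W5: "(?K \<boxtimes> mm) \<odot> (dd \<boxtimes> idn 3) = (?K \<odot> (dd \<boxtimes> ii)) \<boxtimes> mm"
    by (simp add: id3b tL inter idl idr)
  have W6: "?K \<odot> (dd \<boxtimes> ii) = ee \<boxtimes> ll"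
    by (simp add: inter idl idr cR S1 E1 pa2)
  have W7: "(ii \<boxtimes> ii \<boxtimes> dd) \<odot> (dd \<boxtimes> ii) = dd \<boxtimes> dd" by (simp add: nf)
  have W8: "((ee \<boxtimes> ll) \<boxtimes> mm) \<odot> (ii \<boxtimes> cc \<boxtimes> ii) \<odot> (dd \<boxtimes> dd) = ii \<boxtimes> ll"
  proof -
    have a1: "ll \<boxtimes> mm = mm \<odot> (ll \<boxtimes> idn 2)" by (simp add: pa2)
    have a2: "(ll \<boxtimes> idn 2) \<odot> (cc \<boxtimes> ii) = ((ll \<boxtimes> ii) \<odot> cc) \<boxtimes> ii" by (simp add: id2 tL inter idl idr)
    have a: "(ll \<boxtimes> mm) \<odot> (cc \<boxtimes> ii) = mm \<odot> (ii \<boxtimes> ll \<boxtimes> ii)"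
      using a1 a2 brll by (simp add: cR tassoc)
    have b: "((ee \<boxtimes> ll) \<boxtimes> mm) \<odot> (ii \<boxtimes> cc \<boxtimes> ii) = ee \<boxtimes> (mm \<odot> (ii \<boxtimes> ll \<boxtimes> ii))"
      by (simp add: tassoc inter idl idr a)
    have c: "ee \<boxtimes> (mm \<odot> (ii \<boxtimes> ll \<boxtimes> ii)) = (mm \<odot> (ii \<boxtimes> ll \<boxtimes> ii)) \<odot> (ee \<boxtimes> idn 3)"
      by (simp add: pa2)
    have d: "(ee \<boxtimes> idn 3) \<odot> (dd \<boxtimes> dd) = ii \<boxtimes> dd" by (simp add: id3b tL inter idl idr C2)
    have e: "(mm \<odot> (ii \<boxtimes> ll \<boxtimes> ii)) \<odot> (ii \<boxtimes> dd) = ii \<boxtimes> ll"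
      by (simp add: inter idl idr cR RCa E3)
    have "((ee \<boxtimes> ll) \<boxtimes> mm) \<odot> (ii \<boxtimes> cc \<boxtimes> ii) \<odot> (dd \<boxtimes> dd) = (ee \<boxtimes> (mm \<odot> (ii \<boxtimes> ll \<boxtimes> ii))) \<odot> (dd \<boxtimes> dd)"
      by (simp add: cassoc b)
    also have "\<dots> = (mm \<odot> (ii \<boxtimes> ll \<boxtimes> ii)) \<odot> (ee \<boxtimes> idn 3) \<odot> (dd \<boxtimes> dd)" by (simp add: c cR)
    also have "\<dots> = ii \<boxtimes> ll" using d e by simp
    finally show ?thesis .
  qed
  have "Ds \<odot> Phi' = ((ll \<odot> mm) \<boxtimes> ii) \<odot> (SS \<boxtimes> dd) \<odot> (ii \<boxtimes> mm) \<odot> (dd \<boxtimes> ii)"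
    unfolding Ds_def Phi'_def by (simp add: cR)
  also have "\<dots> = ((ll \<odot> mm) \<boxtimes> ii) \<odot> (SS \<boxtimes> (mm \<boxtimes> mm)) \<odot> (ii \<boxtimes> (ii \<boxtimes> cc \<boxtimes> ii)) \<odot> (ii \<boxtimes> (dd \<boxtimes> dd)) \<odot> (dd \<boxtimes> ii)"
    by (simp add: cR W1 ctx21[OF W1])
  also have "\<dots> = (?K \<boxtimes> mm) \<odot> (ii \<boxtimes> (ii \<boxtimes> cc \<boxtimes> ii)) \<odot> (dd \<boxtimes> ii \<boxtimes> dd) \<odot> (dd \<boxtimes> ii)"
    by (simp add: cR W2 ctx21[OF W2] W3)
  also have "\<dots> = (?K \<boxtimes> mm) \<odot> (dd \<boxtimes> idn 3) \<odot> (ii \<boxtimes> cc \<boxtimes> ii) \<odot> (ii \<boxtimes> ii \<boxtimes> dd) \<odot> (dd \<boxtimes> ii)"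
    by (simp add: cR W4 ctx21[OF W4])
  also have "\<dots> = ((ee \<boxtimes> ll) \<boxtimes> mm) \<odot> (ii \<boxtimes> cc \<boxtimes> ii) \<odot> (ii \<boxtimes> ii \<boxtimes> dd) \<odot> (dd \<boxtimes> ii)"
    using W5 W6 by (simp add: cR ctx21[OF W5])
  also have "\<dots> = ((ee \<boxtimes> ll) \<boxtimes> mm) \<odot> (ii \<boxtimes> cc \<boxtimes> ii) \<odot> (dd \<boxtimes> dd)"
    by (simp add: cR W7)
  also have "\<dots> = ii \<boxtimes> ll" by (rule W8)
  finally show ?thesis .
qed

lemma K: "DD = (ii \<boxtimes> mm) \<odot> (XX \<boxtimes> ii)"
proof -
  have "DD = (Phi \<odot> Phi') \<odot> DD" by (simp add: Gal1 idl)
  also have "\<dots> = Phi \<odot> (LL \<boxtimes> ii)" by (simp add: cR T)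
  also have "\<dots> = (ii \<boxtimes> mm) \<odot> (XX \<boxtimes> ii)" unfolding Phi_def XX_def by (simp add: tL inter idl idr cR)
  finally show ?thesis .
qed
lemma Ks: "Ds = (ii \<boxtimes> ll) \<odot> Phi"
proof -
  have "Ds = Ds \<odot> (Phi' \<odot> Phi)" by (simp add: Gal2 idr)
  also have "\<dots> = (ii \<boxtimes> ll) \<odot> Phi" by (simp add: cassoc W)
  finally show ?thesis .
qed
lemma D1: "DD = (mm \<boxtimes> ii) \<odot> (ii \<boxtimes> XX)"
proof -
  have "mm \<boxtimes> SS = (mm \<boxtimes> ii) \<odot> (idn 2 \<boxtimes> SS)" by (simp add: nf)
  then have "DD = (mm \<boxtimes> ii) \<odot> (idn 2 \<boxtimes> SS) \<odot> (ii \<boxtimes> (dd \<odot> LL))" unfolding DD_def by (simp add: cR)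
  also have "\<dots> = (mm \<boxtimes> ii) \<odot> (ii \<boxtimes> XX)" unfolding XX_def by (simp add: nf)
  finally show ?thesis .
qed
lemma eS: "ee \<odot> SS = ee"
proof -
  have 1: "ee \<odot> (mm \<odot> (ii \<boxtimes> SS) \<odot> dd) = ee" by (simp add: S2 cassoc B4 idl)
  have 2: "ee \<odot> (mm \<odot> (ii \<boxtimes> SS) \<odot> dd) = (ee \<boxtimes> (ee \<odot> SS)) \<odot> dd"
    by (simp add: cassoc B3 inter idl idr)
  have 3: "ee \<boxtimes> (ee \<odot> SS) = (ee \<odot> SS) \<odot> (ee \<boxtimes> ii)" by (simp add: pa2)
  have "ee = (ee \<odot> SS) \<odot> ((ee \<boxtimes> ii) \<odot> dd)" using 1 2 3 by (simp add: cassoc)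
  then show ?thesis by (simp add: C2 idr)
qed
lemma L0: "(ll \<boxtimes> ii) \<odot> Phi' = ll \<boxtimes> ii"
proof -
  have "(ll \<boxtimes> ii) \<odot> Phi' = (ll \<boxtimes> mm) \<odot> (dd \<boxtimes> ii)" unfolding Phi'_def by (simp add: cassoc inter idl idr)
  also have "\<dots> = mm \<odot> (ll \<boxtimes> idn 2) \<odot> (dd \<boxtimes> ii)" by (simp add: pa2 pa2c cR)
  also have "\<dots> = mm \<odot> (((ll \<boxtimes> ii) \<odot> dd) \<boxtimes> ii)" by (simp add: id2 tL inter idl idr)
  also have "\<dots> = ll \<boxtimes> ii" by (simp add: RCa E4)
  finally show ?thesis .
qed
lemma Lc: "(ll \<boxtimes> ii) \<odot> DD = ii"
proof -
  have "(ll \<boxtimes> ii) \<odot> DD = ((ll \<boxtimes> ii) \<odot> Phi') \<odot> DD" by (simp add: L0)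
  also have "\<dots> = (ll \<boxtimes> ii) \<odot> (LL \<boxtimes> ii)" by (simp add: cR T)
  also have "\<dots> = ii" by (simp add: inter idl Na tidn0l)
  finally show ?thesis .
qed
lemma MSU: "mm \<odot> (SS \<boxtimes> uu) = SS"
proof -
  have "mm \<odot> (ii \<boxtimes> uu) \<odot> SS = mm \<odot> (SS \<boxtimes> uu)" by (simp add: pa3)
  then show ?thesis by (simp add: cassoc A3 idl)
qed
lemma LS: "(ii \<boxtimes> (ll \<odot> SS)) \<odot> dd = (ll \<odot> SS) \<boxtimes> uu"
proof -
  have a: "Ds \<odot> (ii \<boxtimes> uu) = (ll \<odot> SS) \<boxtimes> uu"
    unfolding Ds_def by (simp add: cR inter inter2 idl idr B2 tL MSU)
  have b1: "Phi \<odot> (ii \<boxtimes> uu) = (ii \<boxtimes> mm) \<odot> (ii \<boxtimes> SS \<boxtimes> ii) \<odot> (idn 2 \<boxtimes> uu) \<odot> dd"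
    unfolding Phi_def by (simp add: cR inter idl idr pa3)
  have b2: "(ii \<boxtimes> ll) \<odot> ((ii \<boxtimes> mm) \<odot> (ii \<boxtimes> SS \<boxtimes> ii) \<odot> (idn 2 \<boxtimes> uu) \<odot> dd) = (ii \<boxtimes> (ll \<odot> SS)) \<odot> dd"
    by (simp add: nf MSU)
  have "Ds \<odot> (ii \<boxtimes> uu) = (ii \<boxtimes> ll) \<odot> (Phi \<odot> (ii \<boxtimes> uu))" by (simp add: Ks cR)
  then show ?thesis using a b1 b2 by simp
qed
lemma DDL: "DD \<odot> LL = LL \<boxtimes> LL"
proof -
  have 1: "DD \<odot> LL = (ii \<boxtimes> mm) \<odot> (idn 2 \<boxtimes> LL) \<odot> XX" by (simp add: K cR pa3 pa4)
  have LIc: "\<And>r. valid r \<Longrightarrow> cd r = Suc 0 \<Longrightarrow> mm \<odot> ((ii \<boxtimes> LL) \<odot> r) = LL \<odot> (ee \<odot> r)"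
    using ctx21[OF LIa] by (simp add: cR)
  have 2: "(ii \<boxtimes> mm) \<odot> (idn 2 \<boxtimes> LL) \<odot> XX = (ii \<boxtimes> (LL \<odot> ee)) \<odot> dd \<odot> LL"
    unfolding XX_def by (simp add: nf LIc eS)
  have 3: "(ii \<boxtimes> (LL \<odot> ee)) \<odot> dd \<odot> LL = (ii \<boxtimes> LL) \<odot> (ii \<boxtimes> ee) \<odot> dd \<odot> LL"
    by (simp add: inter inter2 idl idr cR)
  have 4: "(ii \<boxtimes> LL) \<odot> (ii \<boxtimes> ee) \<odot> dd \<odot> LL = LL \<boxtimes> LL" by (simp add: C3c pa3)
  show ?thesis using 1 2 3 4 by simp
qed
lemma DDu: "DD \<odot> uu = XX"
proof -
  have 1: "DD \<odot> uu = (mm \<boxtimes> ii) \<odot> (uu \<boxtimes> idn 2) \<odot> XX" by (simp add: D1 cR pa3 pa4)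
  have 2: "(mm \<boxtimes> ii) \<odot> (uu \<boxtimes> idn 2) = idn 2" by (simp add: id2 tL inter idl idr A2)
  show ?thesis using 1 2 by (simp add: cassoc idl)
qed
lemma Rc: "(ii \<boxtimes> ll) \<odot> DD = ii"
proof -
  let ?s = "ll \<odot> SS \<odot> LL"
  have LSc: "\<And>r. valid r \<Longrightarrow> cd r = Suc 0 \<Longrightarrow> (ii \<boxtimes> (ll \<odot> SS)) \<odot> (dd \<odot> r) = ((ll \<odot> SS) \<boxtimes> uu) \<odot> r"
    using ctx21[OF LS] by simp
  have pu: "(ll \<odot> SS) \<boxtimes> uu = uu \<odot> (ll \<odot> SS)" using pa2[of uu "ll \<odot> SS" 0] by (simp add: tidn0r)
  have R1: "(ii \<boxtimes> ll) \<odot> DD = mm \<odot> (ii \<boxtimes> (uu \<odot> ?s))"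
  proof -
    have "(ii \<boxtimes> ll) \<odot> DD = (mm \<boxtimes> (ll \<odot> SS)) \<odot> (ii \<boxtimes> (dd \<odot> LL))" unfolding DD_def by (simp add: cassoc inter idl idr)
    also have "\<dots> = mm \<odot> (idn 2 \<boxtimes> (ll \<odot> SS)) \<odot> (ii \<boxtimes> (dd \<odot> LL))" by (simp add: pa1 pa1c cR)
    also have "\<dots> = mm \<odot> (ii \<boxtimes> (((ll \<odot> SS) \<boxtimes> uu) \<odot> LL))" by (simp add: mI2 LSc)
    also have "\<dots> = mm \<odot> (ii \<boxtimes> (uu \<odot> ?s))" by (simp add: pu cR)
    finally show ?thesis .
  qed
  have R2: "mm \<odot> (ii \<boxtimes> (uu \<odot> ?s)) = ii \<boxtimes> ?s"
  proof -
    have "mm \<odot> (ii \<boxtimes> (uu \<odot> ?s)) = (mm \<odot> (ii \<boxtimes> uu)) \<odot> (ii \<boxtimes> ?s)" by (simp add: inter idl idr cR)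
    then show ?thesis by (simp add: A3 idl)
  qed
  have R3: "?s = idn 0"
  proof -
    have "LL = (ii \<boxtimes> ll) \<odot> (LL \<boxtimes> LL)" by (simp add: inter idl idr Na tidn0r)
    also have "\<dots> = ((ii \<boxtimes> ll) \<odot> DD) \<odot> LL" by (simp add: DDL[symmetric] cassoc)
    also have "\<dots> = (ii \<boxtimes> ?s) \<odot> LL" using R1 R2 by simp
    also have "\<dots> = LL \<boxtimes> ?s" using inter[of LL ii "idn 0" ?s] by (simp add: idl idr tidn0r)
    finally have h: "LL = LL \<boxtimes> ?s" .
    have "ll \<odot> (LL \<boxtimes> ?s) = (ll \<odot> LL) \<boxtimes> ?s" using inter[of LL ll ?s "idn 0"] by (simp add: idl idr tidn0r)
    then have "ll \<odot> LL = idn 0 \<boxtimes> ?s" using h by (simp add: Na)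
    then show ?thesis by (simp add: Na tidn0l)
  qed
  show ?thesis using R1 R2 R3 by (simp add: tidn0r)
qed

lemma F1: "(mm \<boxtimes> ii) \<odot> (ii \<boxtimes> DD) = DD \<odot> mm"
proof -
  have r1: "DD \<odot> mm = (mm \<boxtimes> ii) \<odot> (mm \<boxtimes> XX)" by (simp add: D1 cR pa3)
  have r2: "mm \<boxtimes> XX = (mm \<boxtimes> idn 2) \<odot> (idn 2 \<boxtimes> XX)" by (simp add: nf)
  have r3: "(mm \<boxtimes> ii) \<odot> (mm \<boxtimes> idn 2) = (mm \<odot> (mm \<boxtimes> ii)) \<boxtimes> ii" by (simp add: id2 tL inter idl idr)
  have R: "DD \<odot> mm = ((mm \<odot> (mm \<boxtimes> ii)) \<boxtimes> ii) \<odot> (idn 2 \<boxtimes> XX)"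
    using r1 r2 r3 by (simp add: cassoc)
  have l1: "ii \<boxtimes> ((mm \<boxtimes> ii) \<odot> (ii \<boxtimes> XX)) = (ii \<boxtimes> (mm \<boxtimes> ii)) \<odot> (idn 2 \<boxtimes> XX)" by (simp add: nf)
  have l2: "(mm \<boxtimes> ii) \<odot> (ii \<boxtimes> (mm \<boxtimes> ii)) = (mm \<odot> (ii \<boxtimes> mm)) \<boxtimes> ii" by (simp add: tL inter idl idr)
  have L: "(mm \<boxtimes> ii) \<odot> (ii \<boxtimes> DD) = ((mm \<odot> (ii \<boxtimes> mm)) \<boxtimes> ii) \<odot> (idn 2 \<boxtimes> XX)"
    using l1 l2 by (simp add: D1 cassoc)
  show ?thesis using L R A1 by simp
qed
lemma F2: "(ii \<boxtimes> mm) \<odot> (DD \<boxtimes> ii) = DD \<odot> mm"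
proof -
  have r1: "DD \<odot> mm = (ii \<boxtimes> mm) \<odot> (XX \<boxtimes> mm)" by (simp add: K cR pa4)
  have r2: "XX \<boxtimes> mm = (idn 2 \<boxtimes> mm) \<odot> (XX \<boxtimes> idn 2)" by (simp add: nf)
  have r3: "(ii \<boxtimes> mm) \<odot> (idn 2 \<boxtimes> mm) = ii \<boxtimes> (mm \<odot> (ii \<boxtimes> mm))" by (simp add: id2 tassoc inter idl idr)
  have R: "DD \<odot> mm = (ii \<boxtimes> (mm \<odot> (ii \<boxtimes> mm))) \<odot> (XX \<boxtimes> idn 2)"
    using r1 r2 r3 by (simp add: cassoc)
  have l1: "((ii \<boxtimes> mm) \<odot> (XX \<boxtimes> ii)) \<boxtimes> ii = ((ii \<boxtimes> mm) \<boxtimes> ii) \<odot> ((XX \<boxtimes> ii) \<boxtimes> ii)"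
    by (simp add: inter idl idr)
  have l1': "(XX \<boxtimes> ii) \<boxtimes> ii = XX \<boxtimes> idn 2" by (simp add: tassoc tidn)
  have l2: "(ii \<boxtimes> mm) \<odot> ((ii \<boxtimes> mm) \<boxtimes> ii) = ii \<boxtimes> (mm \<odot> (mm \<boxtimes> ii))" by (simp add: tassoc inter idl idr)
  have L: "(ii \<boxtimes> mm) \<odot> (DD \<boxtimes> ii) = (ii \<boxtimes> (mm \<odot> (mm \<boxtimes> ii))) \<odot> (XX \<boxtimes> idn 2)"
  proof -
    have "(ii \<boxtimes> mm) \<odot> (DD \<boxtimes> ii) = (ii \<boxtimes> mm) \<odot> (((ii \<boxtimes> mm) \<boxtimes> ii) \<odot> (XX \<boxtimes> idn 2))"
      using l1 l1' by (simp add: K[symmetric])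
    also have "\<dots> = (ii \<boxtimes> (mm \<odot> (mm \<boxtimes> ii))) \<odot> (XX \<boxtimes> idn 2)" using l2 by (simp add: cassoc)
    finally show ?thesis .
  qed
  show ?thesis using L R A1 by simp
qed
lemma coassoc: "(DD \<boxtimes> ii) \<odot> DD = (ii \<boxtimes> DD) \<odot> DD"
proof -
  have a: "(ii \<boxtimes> DD) \<odot> DD = (ii \<boxtimes> (mm \<boxtimes> ii)) \<odot> (XX \<boxtimes> DD)"
  proof -
    have "(ii \<boxtimes> DD) \<odot> DD = (ii \<boxtimes> DD) \<odot> ((ii \<boxtimes> mm) \<odot> (XX \<boxtimes> ii))"
      using arg_cong[where f="\<lambda>z. (ii \<boxtimes> DD) \<odot> z", OF K] .
    also have "\<dots> = (ii \<boxtimes> (DD \<odot> mm)) \<odot> (XX \<boxtimes> ii)" by (simp add: inter2 idl)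
    also have "\<dots> = (ii \<boxtimes> ((mm \<boxtimes> ii) \<odot> (ii \<boxtimes> DD))) \<odot> (XX \<boxtimes> ii)" by (simp add: F1)
    also have "\<dots> = (ii \<boxtimes> (mm \<boxtimes> ii)) \<odot> (ii \<boxtimes> (ii \<boxtimes> DD)) \<odot> (XX \<boxtimes> ii)"
      by (simp add: inter inter2 idl idr)
    also have "(ii \<boxtimes> (ii \<boxtimes> DD)) \<odot> (XX \<boxtimes> ii) = XX \<boxtimes> DD" by (simp add: nf)
    finally show ?thesis .
  qed
  have b: "(DD \<boxtimes> ii) \<odot> DD = (ii \<boxtimes> (mm \<boxtimes> ii)) \<odot> (DD \<boxtimes> XX)"
  proof -
    have "(DD \<boxtimes> ii) \<odot> DD = (DD \<boxtimes> ii) \<odot> ((mm \<boxtimes> ii) \<odot> (ii \<boxtimes> XX))"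
      using arg_cong[where f="\<lambda>z. (DD \<boxtimes> ii) \<odot> z", OF D1] .
    also have "\<dots> = ((DD \<odot> mm) \<boxtimes> ii) \<odot> (ii \<boxtimes> XX)" by (simp add: inter2 idl)
    also have "\<dots> = (((ii \<boxtimes> mm) \<odot> (DD \<boxtimes> ii)) \<boxtimes> ii) \<odot> (ii \<boxtimes> XX)" by (simp add: F2)
    also have "\<dots> = ((ii \<boxtimes> mm) \<boxtimes> ii) \<odot> ((DD \<boxtimes> ii) \<boxtimes> ii) \<odot> (ii \<boxtimes> XX)"
      by (simp add: inter inter2 idl idr)
    also have "((DD \<boxtimes> ii) \<boxtimes> ii) \<odot> (ii \<boxtimes> XX) = DD \<boxtimes> XX" by (simp add: nf)
    also have "(ii \<boxtimes> mm) \<boxtimes> ii = ii \<boxtimes> (mm \<boxtimes> ii)" by (simp add: tassoc)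
    finally show ?thesis .
  qed
  have c1: "(ii \<boxtimes> (mm \<boxtimes> ii)) \<odot> (XX \<boxtimes> DD) = (ii \<boxtimes> ((mm \<odot> (ii \<boxtimes> mm)) \<boxtimes> ii)) \<odot> (XX \<boxtimes> (ii \<boxtimes> XX))"
  proof -
    have h1: "XX \<boxtimes> DD = (idn 2 \<boxtimes> (mm \<boxtimes> ii)) \<odot> (XX \<boxtimes> (ii \<boxtimes> XX))"
      using inter[of XX "idn 2" "ii \<boxtimes> XX" "mm \<boxtimes> ii"] by (simp add: D1 idl)
    have h2: "(ii \<boxtimes> (mm \<boxtimes> ii)) \<odot> (idn 2 \<boxtimes> (mm \<boxtimes> ii)) = ii \<boxtimes> ((mm \<odot> (ii \<boxtimes> mm)) \<boxtimes> ii)"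
      by (simp add: mI1 tL inter idl idr)
    show ?thesis using h1 h2 by (simp add: cassoc)
  qed
  have c2: "(ii \<boxtimes> (mm \<boxtimes> ii)) \<odot> (DD \<boxtimes> XX) = (ii \<boxtimes> ((mm \<odot> (mm \<boxtimes> ii)) \<boxtimes> ii)) \<odot> (XX \<boxtimes> (ii \<boxtimes> XX))"
  proof -
    have h1: "DD \<boxtimes> XX = ((ii \<boxtimes> mm) \<boxtimes> idn 2) \<odot> ((XX \<boxtimes> ii) \<boxtimes> XX)"
      using inter[of "XX \<boxtimes> ii" "ii \<boxtimes> mm" XX "idn 2"] by (simp add: K idl)
    have h1': "(XX \<boxtimes> ii) \<boxtimes> XX = XX \<boxtimes> (ii \<boxtimes> XX)" by (simp add: tassoc)
    have h2a: "(ii \<boxtimes> (mm \<boxtimes> ii)) \<odot> ((ii \<boxtimes> mm) \<boxtimes> idn 2) = ii \<boxtimes> ((mm \<boxtimes> ii) \<odot> (mm \<boxtimes> idn 2))"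
      by (simp add: tassoc inter idl idr)
    have h2b: "(mm \<boxtimes> ii) \<odot> (mm \<boxtimes> idn 2) = (mm \<odot> (mm \<boxtimes> ii)) \<boxtimes> ii" by (simp add: id2 tL inter idl idr)
    have h2: "(ii \<boxtimes> (mm \<boxtimes> ii)) \<odot> ((ii \<boxtimes> mm) \<boxtimes> idn 2) = ii \<boxtimes> ((mm \<odot> (mm \<boxtimes> ii)) \<boxtimes> ii)"
      using h2a h2b by simp
    show ?thesis using h1 h1' h2 by (simp add: cassoc)
  qed
  show ?thesis using a b c1 c2 A1 by simp
qed

lemma Dphi:
  assumes vp: "valid pp" and dp: "dm pp = Suc 0" "cd pp = Suc 0"
  and PM: "pp \<odot> mm = mm \<odot> (pp \<boxtimes> pp)" and PSS: "pp \<odot> SS = SS \<odot> pp"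
  and PD: "dd \<odot> pp = (pp \<boxtimes> pp) \<odot> dd" and PL: "pp \<odot> LL = LL"
  shows "DD \<odot> pp = (pp \<boxtimes> pp) \<odot> DD"
proof -
  have 1: "DD \<odot> pp = (mm \<boxtimes> SS) \<odot> (pp \<boxtimes> (dd \<odot> LL))" unfolding DD_def using vp dp by (simp add: cR pa3)
  have 2: "(pp \<boxtimes> pp) \<odot> (mm \<boxtimes> SS) = (mm \<boxtimes> SS) \<odot> ((pp \<boxtimes> pp) \<boxtimes> pp)" using vp dp by (simp add: inter PM PSS)
  have PDc: "(pp \<boxtimes> pp) \<odot> (dd \<odot> LL) = dd \<odot> LL"
  proof -
    have "(pp \<boxtimes> pp) \<odot> (dd \<odot> LL) = (dd \<odot> pp) \<odot> LL" using vp dp by (simp add: cassoc PD)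
    then show ?thesis using vp dp by (simp add: cR PL)
  qed
  have 3: "((pp \<boxtimes> pp) \<boxtimes> pp) \<odot> (ii \<boxtimes> (dd \<odot> LL)) = pp \<boxtimes> (dd \<odot> LL)" using vp dp by (simp add: tassoc inter idr PDc)
  have "(pp \<boxtimes> pp) \<odot> DD = (mm \<boxtimes> SS) \<odot> ((pp \<boxtimes> pp) \<boxtimes> pp) \<odot> (ii \<boxtimes> (dd \<odot> LL))"
    unfolding DD_def using vp dp 2 by (simp add: cassoc)
  also have "\<dots> = DD \<odot> pp" using 1 3 by simp
  finally show ?thesis by simp
qed

lemma phiiii:
  assumes vp: "valid pp" and dp: "dm pp = Suc 0" "cd pp = Suc 0"
  shows "mm \<odot> (pp \<boxtimes> ii) \<odot> (DD \<odot> uu) = mm \<odot> (pp \<boxtimes> SS) \<odot> (dd \<odot> LL)"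
  unfolding DDu XX_def using vp dp by (simp add: inter2 idl idr cR)

end

theorem mainTheorem17:
  fixes C :: "('o, 'm) smc" and H :: 'o
    and m u d e S Si Lam lam phi theta :: 'm
  assumes "strict_symmetric_monoidal_category C"
    and "is_extended_hopf_algebra C H m u d e S Si Lam lam phi theta"
  shows "is_extended_frobenius_structure C H m u
           (Cmp C (TM C m S) (TM C (Idm C H) (Cmp C d Lam))) lam phi theta"
proof -
  note ex = assms(2)[unfolded is_extended_hopf_algebra_def is_integral_hopf_algebra_def is_integral_hopf_endo_def]
  have hopf: "is_hopf_algebra C H m u d e S" using ex by blast
  have HO: "H \<in> Obj C" using hopf unfolding is_hopf_algebra_def is_algebra_def by blast
  interpret hp C H m u d e S Lam lam
    apply unfold_locales
    using assms(1) HO hopf ex by auto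
  let ?D = "Cmp C (TM C m S) (TM C (Idm C H) (Cmp C d Lam))"
  have moDD: "mo DD = ?D" by (simp add: DD_def comp_def tens_def idn_def)
  have mo_eq: "\<And>x y. x = y \<Longrightarrow> mo x = mo y" by simp
  have tD: "?D \<in> Hom C H (TO C H H)" using vDD(1) moDD P2 by (simp add: valid_def)
  have alg: "is_algebra C H m u" using hopf unfolding is_hopf_algebra_def by blast
  have tl: "lam \<in> Hom C H (Uo C)" using ex by blast
  have co1: "Cmp C (TM C ?D (Idm C H)) ?D = Cmp C (TM C (Idm C H) ?D) ?D"
    using mo_eq[OF coassoc] moDD by (simp add: comp_def tens_def idn_def)
  have co2: "Cmp C (TM C lam (Idm C H)) ?D = Idm C H"
    using mo_eq[OF Lc] moDD by (simp add: comp_def tens_def idn_def)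
  have co3: "Cmp C (TM C (Idm C H) lam) ?D = Idm C H"
    using mo_eq[OF Rc] moDD by (simp add: comp_def tens_def idn_def)
  have fr1: "Cmp C (TM C (Idm C H) m) (TM C ?D (Idm C H)) = Cmp C ?D m"
    using mo_eq[OF F2] moDD by (simp add: comp_def tens_def idn_def)
  have fr2: "Cmp C (TM C m (Idm C H)) (TM C (Idm C H) ?D) = Cmp C ?D m"
    using mo_eq[OF F1] moDD by (simp add: comp_def tens_def idn_def)
  have frob: "is_frobenius_algebra C H m u ?D lam"
    unfolding is_frobenius_algebra_def is_coalgebra_def
    using alg HO tD tl co1 co2 co3 fr1 fr2 by blast
  define pp where "pp = Ar (Suc 0) (Suc 0) phi"
  have tphi: "phi \<in> Hom C H H" using ex by blast
  have vp: "valid pp" "dm pp = Suc 0" "cd pp = Suc 0" using tphi by (simp_all add: pp_def valid_def)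
  have PM: "pp \<odot> mm = mm \<odot> (pp \<boxtimes> pp)" using ex by (simp add: pp_def comp_def tens_def)
  have PSS: "pp \<odot> SS = SS \<odot> pp" using ex by (simp add: pp_def comp_def tens_def)
  have PD: "dd \<odot> pp = (pp \<boxtimes> pp) \<odot> dd" using ex by (simp add: pp_def comp_def tens_def)
  have PL: "pp \<odot> LL = LL" using ex by (simp add: pp_def comp_def tens_def)
  have dphi: "Cmp C ?D phi = Cmp C (TM C phi phi) ?D"
    using mo_eq[OF Dphi[OF vp PM PSS PD PL]] moDD by (simp add: pp_def comp_def tens_def idn_def)
  have iii: "Cmp C m (Cmp C (TM C phi (Idm C H)) (Cmp C ?D u)) = Cmp C m (TM C theta theta)"
  proof -
    have "Cmp C m (Cmp C (TM C phi (Idm C H)) (Cmp C ?D u)) = Cmp C m (Cmp C (TM C phi S) (Cmp C d Lam))"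
      using mo_eq[OF phiiii[OF vp]] moDD by (simp add: pp_def comp_def tens_def idn_def)
    then show ?thesis using ex by simp
  qed
  show ?thesis unfolding is_extended_frobenius_structure_def
    using frob ex dphi iii by auto
qed
end
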